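(* Let $m\ge1$, $0<a_1<\cdots<a_m$ reals, and $f\in\mathbb R_{\ge0}[X]$ with $\mathfrak d(f)\in\{m,m+1\}$. Put $s=\lceil\mathrm{Sign}(f)\rceil^+$ if $\mathfrak d(f)=m$ and $s=\lceil\mathrm{Sign}(f)\rceil$ if $\mathfrak d(f)=m+1$; then $\#\operatorname{supp}(s)=m+1$; write $\operatorname{supp}(s)=\{d_1>\cdots>d_{m+1}\}$. Then there exists $(c_1,\dots,c_{m+1})\in\mathbb R^{m+1}$ with $\sum_{j=1}^{m+1}c_ja_i^{d_j}=0$ for all $i\in[m]$ and $c_1>0$. Fix any such vector, let $h=\sum_{j=1}^{m+1}c_jX^{d_j}$, write $f=\sum_{j=1}^{m+1}e_jX^{d_j}$ (possible since $\operatorname{supp}(\mathrm{Sign} f)\subseteq\operatorname{supp}(s)$), let $t=\min_{1\le i\le\lfloor (m+1)/2\rfloor}|e_{2i}/c_{2i}|$ and $g=f+th$. Then: (0) $g\in\mathbb R_{\ge0}[X]$ (and $c_{2i}\neq 0$ for all relevant $i$); (1) $g(a_i)=f(a_i)$ for all $i\in[m]$; (2) with $s'=\mathrm{Sign}(g)$: $\operatorname{supp}(s')\subsetneq\operatorname{supp}(s)$ and $\operatorname{supp}(s)\setminus\operatorname{supp}(s')\subseteq\{d_{2i}:1\le 2i\le m+1\}$; in particular $\mathrm{Sign}(f)\preceq s\prec s'$, $\mathfrak d(s')=\mathfrak d(s)=m+1$, and $\#\operatorname{supp}(s')\le m$; (3) $g(a)>f(a)$ for all $a>a_m$; (4) $\mathrm{Sign}((1-u)f+ug)=s$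 for all $0<u<1$.
   Context: $\mathbb R_{\ge0}[X]$: real polynomials with nonnegative coefficients. $\omega=\{0,1,\dots\}$, $[m]=\{1,\dots,m\}$. A finite sign sequence is $s\in\{-,0,+\}^\omega$ with finitely many nonzero entries; $\mathscr S$ their set; $\operatorname{supp}(s)=\{i:s_i\ne0\}$; $\mathscr S_+=\mathscr S\cap\{0,+\}^\omega$; $\mathrm{Sign}(f)$ is the sign sequence of the coefficients of $f$. $\mathrm{SC}(t)$ = number of pairs $i<j$ with $\{t_i,t_j\}=\{-,+\}$ and $t_k=0$ for $i<k<j$. $\mathfrak d(s)=\max\{\mathrm{SC}(t):t\in\mathscr S,\ t_i\in\{-,0,s_i\}\ \forall i\}$, $\mathfrak d(f)=\mathfrak d(\mathrm{Sign} f)$. $\mathscr S_+^\circ=\{s\in\mathscr S_+:\mathfrak d(s)=\#\operatorname{supp}(s)\}$. Interval decomposition of $s\in\mathscr S_+$: $\operatorname{supp}(s)=X_0\amalg\cdots\amalg X_k$ into intervals with $0\in X_0$ if $0\in\operatorname{supp}(s)$ else $X_0=\emptyset$, $X_i\neq\emptyset$ for $i\in[k]$, $\min X_i-\max X_{i-1}\ge2$ ($\max\emptyset=-\infty$). $\lfloor X_i\rfloor=\{\min X_i-1\}\amalg X_i$ if $\#X_i$ odd, else $X_i$; $\lceil X_i\rceil=X_i\amalg\{\max X_i+1\}$ if $\#X_i$ odd, else $X_i$; $\operatorname{supp}(\lfloor s\rfloor)=X_0\amalg\lfloor X_1\rfloor\amalg\cdots\amalg\lfloor X_k\rfloor$,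 $\operatorname{supp}(\lceil s\rceil)=X_0\amalg\lceil X_1\rceil\amalg\cdots\amalg\lceil X_k\rceil$. For $u\in\mathscr S_+$, $\operatorname{supp}(u^+)=\operatorname{supp}(u)\cup\{\min\{i:u_i=0\}\}$. On $\mathscr S_+^\circ$: $s\preceq_0 s'$ iff, with supports $\{d_1>\cdots>d_m\}$, $\{d'_1>\cdots>d'_{m'}\}$, $m\le m'$ and $d_i\le d'_i$ for $i\in[m]$. On $\mathscr S_+$: $s\preceq s'$ iff $s=s'$, or $s\ne s'$ and $\lceil s\rceil\preceq_0\lfloor s'\rfloor$; $s\prec s'$ means $s\preceq s'$, $s\neq s'$. *)

theory Defs
  imports "HOL-Computational_Algebra.Polynomial"
begin

datatype sgnsym = Neg | Zer | Pos

definition ssupp :: "(nat \<Rightarrow> sgnsym) \<Rightarrow> nat set" where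
  "ssupp t = {i. t i \<noteq> Zer}"

definition SS :: "(nat \<Rightarrow> sgnsym) set" where
  "SS = {t. finite (ssupp t)}"

definition SSplus :: "(nat \<Rightarrow> sgnsym) set" where
  "SSplus = {t. t \<in> SS \<and> (\<forall>i. t i \<in> {Zer, Pos})}"

definition Sign :: "real poly \<Rightarrow> nat \<Rightarrow> sgnsym" where
  "Sign f = (\<lambda>i. if coeff f i > 0 then Pos else if coeff f i < 0 then Neg else Zer)"

definition nonneg_poly :: "real poly \<Rightarrow> bool" where
  "nonneg_poly f \<longleftrightarrow> (\<forall>i. coeff f i \<ge> 0)"

definition SC :: "(nat \<Rightarrow> sgnsym) \<Rightarrow> nat" where
  "SC t = card {(i, j). i < j \<and> {t i, t j} = {Neg, Pos} \<and> (\<forall>k. i < k \<and> k < j \<longrightarrow> t k = Zer)}"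

definition dd :: "(nat \<Rightarrow> sgnsym) \<Rightarrow> nat" where
  "dd s = Max {SC t | t. t \<in> SS \<and> (\<forall>i. t i \<in> {Neg, Zer, s i})}"

definition ddpoly :: "real poly \<Rightarrow> nat" where
  "ddpoly f = dd (Sign f)"

definition SSplus_circ :: "(nat \<Rightarrow> sgnsym) set" where
  "SSplus_circ = {s. s \<in> SSplus \<and> dd s = card (ssupp s)}"

definition of_supp :: "nat set \<Rightarrow> nat \<Rightarrow> sgnsym" where
  "of_supp A = (\<lambda>i. if i \<in> A then Pos else Zer)"

text \<open>Interval decomposition: the maximal intervals (runs) of the support.
  The run containing 0 (if any) is X_0; the others are X_1, ..., X_k.\<close>
definition runs :: "(nat \<Rightarrow> sgnsym) \<Rightarrow> nat set set" where
  "runs s = {{a..b} | a b. a \<le> b \<and> {a..b} \<subseteq> ssupp s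
               \<and> (0 < a \<longrightarrow> a - 1 \<notin> ssupp s) \<and> b + 1 \<notin> ssupp s}"

definition floorI :: "nat set \<Rightarrow> nat set" where
  "floorI X = (if 0 \<in> X then X else if odd (card X) then insert (Min X - 1) X else X)"

definition ceilI :: "nat set \<Rightarrow> nat set" where
  "ceilI X = (if 0 \<in> X then X else if odd (card X) then insert (Max X + 1) X else X)"

definition sfloor :: "(nat \<Rightarrow> sgnsym) \<Rightarrow> nat \<Rightarrow> sgnsym" where
  "sfloor s = of_supp (\<Union>X \<in> runs s. floorI X)"

definition sceil :: "(nat \<Rightarrow> sgnsym) \<Rightarrow> nat \<Rightarrow> sgnsym" where
  "sceil s = of_supp (\<Union>X \<in> runs s. ceilI X)"

definition splus :: "(nat \<Rightarrow> sgnsym) \<Rightarrow> nat \<Rightarrow> sgnsym" where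
  "splus u = of_supp (ssupp u \<union> {LEAST i. u i = Zer})"

text \<open>Support listed in decreasing order d_1 > d_2 > ... (0-indexed list).\<close>
definition dec_supp :: "(nat \<Rightarrow> sgnsym) \<Rightarrow> nat list" where
  "dec_supp s = rev (sorted_list_of_set (ssupp s))"

definition preceq0 :: "(nat \<Rightarrow> sgnsym) \<Rightarrow> (nat \<Rightarrow> sgnsym) \<Rightarrow> bool" where
  "preceq0 s s' \<longleftrightarrow> s \<in> SSplus_circ \<and> s' \<in> SSplus_circ \<and>
     length (dec_supp s) \<le> length (dec_supp s') \<and>
     (\<forall>i < length (dec_supp s). dec_supp s ! i \<le> dec_supp s' ! i)"

definition spreceq :: "(nat \<Rightarrow> sgnsym) \<Rightarrow> (nat \<Rightarrow> sgnsym) \<Rightarrow> bool" where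
  "spreceq s s' \<longleftrightarrow> s \<in> SSplus \<and> s' \<in> SSplus \<and>
     (s = s' \<or> (s \<noteq> s' \<and> preceq0 (sceil s) (sfloor s')))"

definition sprec :: "(nat \<Rightarrow> sgnsym) \<Rightarrow> (nat \<Rightarrow> sgnsym) \<Rightarrow> bool" where
  "sprec s s' \<longleftrightarrow> spreceq s s' \<and> s \<noteq> s'"

end

theory Submission
  imports Defs
begin


definition sp :: "(nat \<Rightarrow> nat) \<Rightarrow> (nat \<Rightarrow> real) \<Rightarrow> nat \<Rightarrow> real poly" where
  "sp e b K = (\<Sum>k<K. monom (b k) (e k))"

definition V :: "(nat \<Rightarrow> real) \<Rightarrow> nat \<Rightarrow> nat" where
  "V b K = (\<Sum>k<K-1. if b k * b (Suc k) < 0 then 1 else 0)"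

lemma coeff_sum_monom_in:
  assumes "finite I" "inj_on e I" "k \<in> I"
  shows "coeff (\<Sum>j\<in>I. monom (b j :: real) (e j)) (e k) = b k"
proof -
  have "coeff (\<Sum>j\<in>I. monom (b j) (e j)) (e k) = (\<Sum>j\<in>I. if e j = e k then b j else 0)"
    by (simp add: coeff_sum coeff_monom)
  also have "\<dots> = (\<Sum>j\<in>I. if j = k then b j else 0)"
    by (rule sum.cong) (use assms in \<open>auto dest: inj_onD\<close>)
  also have "\<dots> = b k" using assms by simp
  finally show ?thesis .
qed

lemma coeff_sum_monom_out:
  assumes "n \<notin> e ` I"
  shows "coeff (\<Sum>j\<in>I. monom (b j :: real) (e j)) n = 0"
  using assms by (auto simp: coeff_sum coeff_monom intro!: sum.neutral)

lemma poly_sum_monom: "poly (\<Sum>j\<in>I. monom (b j) (e j)) (x::real) = (\<Sum>j\<in>I. b j * x ^ e j)"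
  by (simp add: poly_sum poly_monom)

lemma sq_pos: "(x::real) \<noteq> 0 \<Longrightarrow> 0 < x * x"
  by (cases "x > 0") (auto simp: mult_neg_neg)

lemma rolle_count:
  fixes p :: "real poly"
  assumes fin: "finite R" and ne: "R \<noteq> {}" and roots: "\<forall>x\<in>R. poly p x = 0" and d: "pderiv p \<noteq> 0"
  shows "card R \<le> card {x. Min R < x \<and> x < Max R \<and> poly (pderiv p) x = 0} + 1"
proof -
  define T where "T = {x. Min R < x \<and> x < Max R \<and> poly (pderiv p) x = 0}"
  define nx where "nx r = Min {y\<in>R. y > r}" for r
  have nx: "nx r \<in> R \<and> r < nx r \<and> (\<forall>y\<in>R. r < y \<longrightarrow> nx r \<le> y)" if "r \<in> R" "r \<noteq> Max R" for r
  proof -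
    have "r < Max R" using that fin by (meson Max_ge order_le_neq_trans)
    hence ne2: "{y\<in>R. y > r} \<noteq> {}" using fin ne Max_in by blast
    have f2: "finite {y\<in>R. y > r}" using fin by auto
    show ?thesis unfolding nx_def using Min_in[OF f2 ne2] Min_le[OF f2] by auto
  qed
  have ex: "\<exists>z. r < z \<and> z < nx r \<and> poly (pderiv p) z = 0" if "r \<in> R" "r \<noteq> Max R" for r
  proof -
    from nx[OF that] have "r < nx r" "nx r \<in> R" by auto
    from poly_MVT[OF this(1), of p] obtain z where z: "r < z" "z < nx r"
      "poly p (nx r) - poly p r = (nx r - r) * poly (pderiv p) z" by auto
    have "poly p (nx r) = 0" "poly p r = 0" using roots \<open>nx r \<in> R\<close> that by auto
    with z have "poly (pderiv p) z = 0" using \<open>r < nx r\<close> by auto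
    with z show ?thesis by auto
  qed
  define xi where "xi r = (SOME z. r < z \<and> z < nx r \<and> poly (pderiv p) z = 0)" for r
  have xi: "r < xi r \<and> xi r < nx r \<and> poly (pderiv p) (xi r) = 0" if "r \<in> R" "r \<noteq> Max R" for r
    unfolding xi_def by (rule someI_ex[OF ex[OF that]])
  have inj: "inj_on xi (R - {Max R})"
  proof (rule inj_onI)
    fix r1 r2 assume a: "r1 \<in> R - {Max R}" "r2 \<in> R - {Max R}" "xi r1 = xi r2"
    show "r1 = r2"
    proof (rule ccontr)
      assume "r1 \<noteq> r2"
      then consider "r1 < r2" | "r2 < r1" by linarith
      then show False
      proof cases
        case 1
        have "nx r1 \<le> r2" using nx[of r1] a 1 by auto
        then show False using xi[of r1] xi[of r2] a by auto
      next
        case 2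
        have "nx r2 \<le> r1" using nx[of r2] a 2 by auto
        then show False using xi[of r1] xi[of r2] a by auto
      qed
    qed
  qed
  have sub: "xi ` (R - {Max R}) \<subseteq> T"
  proof
    fix y assume "y \<in> xi ` (R - {Max R})"
    then obtain r where r: "r \<in> R" "r \<noteq> Max R" "y = xi r" by auto
    have "Min R \<le> r" using fin r by auto
    moreover have "nx r \<le> Max R" using nx[OF r(1,2)] fin by auto
    ultimately show "y \<in> T" using xi[OF r(1,2)] r unfolding T_def by auto
  qed
  have finT: "finite T" unfolding T_def using poly_roots_finite[OF d] by (rule rev_finite_subset) auto
  have "card (R - {Max R}) \<le> card T" using card_inj_on_le[OF inj sub finT] .
  moreover have "card R = card (R - {Max R}) + 1" using fin ne
    by (metis Max_in One_nat_def add.right_neutral add_Suc_right card.remove)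
  ultimately show ?thesis unfolding T_def by linarith
qed

lemma V_le: "V b K \<le> K - 1"
proof -
  have "V b K \<le> (\<Sum>k<K-1. (1::nat))" unfolding V_def by (rule sum_mono) auto
  thus ?thesis by simp
qed

lemma V_split: "V b (Suc (Suc K)) = (if b 0 * b 1 < 0 then 1 else 0) + V (\<lambda>k. b (Suc k)) (Suc K)"
  by (simp only: V_def diff_Suc_1 sum.lessThan_Suc_shift) simp

lemma V_scale: assumes "\<forall>k<K. 0 < w k" shows "V (\<lambda>k. w k * b k) K = V b K"
  unfolding V_def
proof (rule sum.cong)
  fix k assume "k \<in> {..<K-1}"
  hence "0 < w k" "0 < w (Suc k)" using assms by auto
  hence pos: "0 < w k * w (Suc k)" by simp
  have eq: "w k * b k * (w (Suc k) * b (Suc k)) = (w k * w (Suc k)) * (b k * b (Suc k))" by (simp add: algebra_simps)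
  have "(w k * b k * (w (Suc k) * b (Suc k)) < 0) = (b k * b (Suc k) < 0)"
    unfolding eq by (metis mult_less_cancel_left_pos[OF pos] mult_zero_right)
  thus "(if w k * b k * (w (Suc k) * b (Suc k)) < 0 then 1 else 0) = (if b k * b (Suc k) < 0 then 1 else 0)" by simp
qed simp

definition strict :: "(nat \<Rightarrow> nat) \<Rightarrow> nat \<Rightarrow> bool" where
  "strict e K \<longleftrightarrow> (\<forall>i j. i < j \<longrightarrow> j < K \<longrightarrow> e i < e j)"

lemma strict_inj: "strict e K \<Longrightarrow> inj_on e {..<K}"
  unfolding strict_def inj_on_def by (metis lessThan_iff linorder_neqE_nat order_less_irrefl)

lemma coeff_sp: "strict e K \<Longrightarrow> k < K \<Longrightarrow> coeff (sp e b K) (e k) = b k"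
  unfolding sp_def by (rule coeff_sum_monom_in) (auto dest: strict_inj)

lemma sp_nonzero: "strict e K \<Longrightarrow> 0 < K \<Longrightarrow> b 0 \<noteq> 0 \<Longrightarrow> sp e b K \<noteq> 0"
  using coeff_sp[of e K 0 b] by auto

lemma poly_sp_shift:
  assumes "\<forall>k<K. e0 \<le> e k"
  shows "poly (sp e b K) x = x ^ e0 * poly (sp (\<lambda>k. e k - e0) b K) x"
  unfolding sp_def poly_sum_monom sum_distrib_left
proof (rule sum.cong)
  fix k assume "k \<in> {..<K}"
  hence "e k = e0 + (e k - e0)" using assms by auto
  hence "x ^ e k = x ^ e0 * x ^ (e k - e0)" by (metis power_add)
  thus "b k * x ^ e k = x ^ e0 * (b k * x ^ (e k - e0))" by simp
qed simp

lemma pderiv_sum_gen: "pderiv (sum f A) = (\<Sum>x\<in>A. pderiv (f x))"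
  using higher_pderiv_sum[of 1 f A] by simp

lemma pderiv_sp:
  assumes "e 0 = 0"
  shows "pderiv (sp e b (Suc K)) = sp (\<lambda>k. e (Suc k) - 1) (\<lambda>k. of_nat (e (Suc k)) * b (Suc k)) K"
  unfolding sp_def sum.lessThan_Suc_shift pderiv_add pderiv_sum_gen pderiv_monom
  by (simp add: assms)

lemma near0:
  fixes q :: "real poly"
  assumes "poly q 0 \<noteq> 0"
  shows "\<exists>\<delta>>0. \<forall>x. 0 < x \<and> x < \<delta> \<longrightarrow> poly q x * poly q 0 > 0"
proof -
  have "(poly q \<longlongrightarrow> poly q 0) (at 0)" using poly_isCont[of 0 q] unfolding isCont_def by simp
  from LIM_D[OF this, of "\<bar>poly q 0\<bar>"] assms obtain s where s: "s > 0"
    "\<forall>x. x \<noteq> 0 \<and> norm (x - 0) < s \<longrightarrow> norm (poly q x - poly q 0) < \<bar>poly q 0\<bar>" by auto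
  have "poly q x * poly q 0 > 0" if "0 < x" "x < s" for x
  proof -
    have "\<bar>poly q x - poly q 0\<bar> < \<bar>poly q 0\<bar>" using s that by auto
    thus ?thesis using assms
      by (smt (verit, best) mult_neg_neg mult_pos_pos)
  qed
  thus ?thesis using s(1) by blast
qed

lemma strict_shift: "strict e K \<Longrightarrow> strict (\<lambda>k. e k - e 0) K"
  unfolding strict_def
proof (intro allI impI)
  fix i j assume a: "\<forall>i j. i < j \<longrightarrow> j < K \<longrightarrow> e i < e j" "i < j" "j < K"
  have "i = 0 \<or> e 0 < e i" using a by (metis less_trans neq0_conv)
  hence "e 0 \<le> e i" by auto
  thus "e i - e 0 < e j - e 0" using a by (meson diff_less_mono)
qed

lemma descartes_sparse:
  "\<forall>e b. strict e K \<longrightarrow> (\<forall>k<K. b k \<noteq> 0) \<longrightarrow> 0 < K \<longrightarrow>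
     finite {x::real. 0 < x \<and> poly (sp e b K) x = 0} \<and> card {x::real. 0 < x \<and> poly (sp e b K) x = 0} \<le> V b K"
proof (induction K)
  case 0
  then show ?case by simp
next
  case (Suc K1)
  show ?case
  proof (intro allI impI)
    fix e :: "nat \<Rightarrow> nat" and b :: "nat \<Rightarrow> real" assume st: "strict e (Suc K1)" and bnz: "\<forall>k<Suc K1. b k \<noteq> 0"
    define R where "R = {x::real. 0 < x \<and> poly (sp e b (Suc K1)) x = 0}"
    show "finite R \<and> card R \<le> V b (Suc K1)" unfolding R_def[symmetric]
    proof (cases "K1 = 0")
      case True
      have "R = {}" unfolding R_def sp_def using True bnz by (auto simp: poly_monom)
      thus ?thesis by simp
    next
      case False
      define e' :: "nat \<Rightarrow> nat" where "e' = (\<lambda>k. e k - e 0)"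
      have st': "strict e' (Suc K1)" unfolding e'_def using strict_shift[OF st] .
      have e'0: "e' 0 = 0" unfolding e'_def by simp
      have ge: "\<forall>k<Suc K1. e 0 \<le> e k"
      proof (intro allI impI)
        fix k assume "k < Suc K1" thus "e 0 \<le> e k" using st unfolding strict_def
          by (cases "k = 0") (auto intro: less_imp_le)
      qed
      define p where "p = sp e' b (Suc K1)"
      have R: "R = {x. 0 < x \<and> poly p x = 0}"
        unfolding R_def p_def e'_def using poly_sp_shift[OF ge, of b] by auto
      have pnz: "p \<noteq> 0" unfolding p_def using sp_nonzero[OF st'] bnz by auto
      have finR: "finite R" unfolding R using poly_roots_finite[OF pnz] by (rule rev_finite_subset) auto
      define e2 :: "nat \<Rightarrow> nat" where "e2 = (\<lambda>k. e' (Suc k) - 1)"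
      define b2 :: "nat \<Rightarrow> real" where "b2 = (\<lambda>k. of_nat (e' (Suc k)) * b (Suc k))"
      have dp: "pderiv p = sp e2 b2 K1" unfolding p_def e2_def b2_def by (rule pderiv_sp[of e', OF e'0])
      have epos: "\<forall>k<K1. 0 < e' (Suc k)"
      proof (intro allI impI)
        fix k assume "k < K1"
        hence "e' 0 < e' (Suc k)" using st' unfolding strict_def by auto
        thus "0 < e' (Suc k)" using e'0 by simp
      qed
      have st2: "strict e2 K1" unfolding strict_def e2_def
      proof (intro allI impI)
        fix i j assume "i < j" "j < K1"
        hence "e' (Suc i) < e' (Suc j)" "0 < e' (Suc i)" using st' epos unfolding strict_def by auto
        thus "e' (Suc i) - 1 < e' (Suc j) - 1" by linarith
      qed
      have b2nz: "\<forall>k<K1. b2 k \<noteq> 0" unfolding b2_def using bnz epos by auto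
      have K1pos: "0 < K1" using False by simp
      have IH0: "finite {x. 0 < x \<and> poly (sp e2 b2 K1) x = 0} \<and> card {x. 0 < x \<and> poly (sp e2 b2 K1) x = 0} \<le> V b2 K1"
        using Suc.IH st2 b2nz K1pos by blast
      have IH: "finite {x. 0 < x \<and> poly (pderiv p) x = 0}" "card {x. 0 < x \<and> poly (pderiv p) x = 0} \<le> V b2 K1"
        using IH0 unfolding dp by auto
      have Vb2: "V b2 K1 = V (\<lambda>k. b (Suc k)) K1" unfolding b2_def by (rule V_scale) (use epos in auto)
      obtain K2 where K2: "K1 = Suc K2" using False not0_implies_Suc by blast
      have Vb: "V b (Suc K1) = (if b 0 * b 1 < 0 then 1 else 0) + V b2 K1"
        using Vb2 unfolding K2 V_split by simp
      have dpnz: "pderiv p \<noteq> 0" unfolding dp using sp_nonzero[OF st2 K1pos] b2nz K1pos by auto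
      define R' where "R' = {x. 0 < x \<and> poly (pderiv p) x = 0}"
      show ?thesis
      proof (cases "R = {}")
        case True thus ?thesis by simp
      next
        case Rne: False
        define T where "T = {x. Min R < x \<and> x < Max R \<and> poly (pderiv p) x = 0}"
        have rc: "card R \<le> card T + 1" unfolding T_def
          by (rule rolle_count[OF finR Rne _ dpnz]) (auto simp: R)
        have minpos: "0 < Min R" using finR Rne by (auto simp: R)
        have TR': "T \<subseteq> R'" unfolding T_def R'_def using minpos by auto
        have finR': "finite R'" using IH(1) unfolding R'_def .
        show ?thesis
        proof (cases "b 0 * b 1 < 0")
          case True
          have "card T \<le> card R'" using card_mono[OF finR' TR'] .
          thus ?thesis using rc IH(2) Vb True finR unfolding R'_def by auto
        next
          case sgn: False
          have "b 0 \<noteq> 0" "b 1 \<noteq> 0" using bnz K2 by auto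
          hence "b 0 * b 1 \<noteq> 0" by simp
          hence b01: "b 0 * b 1 > 0" using sgn by linarith
          \<comment> \<open>find a root of p' in (0, Min R)\<close>
          define e3 :: "nat \<Rightarrow> nat" where "e3 = (\<lambda>k. e2 k - e2 0)"
          define q where "q = sp e3 b2 K1"
          have ge2: "\<forall>k<K1. e2 0 \<le> e2 k"
          proof (intro allI impI)
            fix k assume "k < K1" thus "e2 0 \<le> e2 k" using st2 unfolding strict_def
              by (cases "k = 0") (auto intro: less_imp_le)
          qed
          have pq: "poly (pderiv p) x = x ^ e2 0 * poly q x" for x
            unfolding dp q_def e3_def using poly_sp_shift[OF ge2] .
          have st3: "strict e3 K1" unfolding e3_def using strict_shift[OF st2] .
          have q0: "poly q 0 = b2 0"
            using coeff_sp[OF st3 K1pos, of b2] unfolding q_def by (simp add: poly_0_coeff_0 e3_def)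
          have q0nz: "poly q 0 \<noteq> 0" using q0 b2nz K1pos by auto
          obtain \<delta> where dl: "\<delta> > 0" "\<forall>x. 0 < x \<and> x < \<delta> \<longrightarrow> poly q x * poly q 0 > 0"
            using near0[OF q0nz] by blast
          have sgnq0: "b 1 * poly q 0 > 0"
          proof -
            have "0 < e' (Suc 0)" using epos K1pos by auto
            moreover have "b 1 * b 1 > 0" using \<open>b 1 \<noteq> 0\<close> by (rule sq_pos)
            ultimately have "0 < real (e' (Suc 0)) * (b 1 * b 1)" by simp
            thus ?thesis unfolding q0 b2_def by (simp add: algebra_simps)
          qed
          have near: "b 1 * poly (pderiv p) x > 0" if "0 < x" "x < \<delta>" for x
          proof -
            have A: "poly q x * poly q 0 > 0" using dl that by auto
            have "(b 1 * poly q x) * (b 1 * poly q 0) = (poly q x * poly q 0) * (b 1 * b 1)" by (simp add: algebra_simps)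
            moreover have "b 1 * b 1 > 0" using \<open>b 1 \<noteq> 0\<close> by (rule sq_pos)
            ultimately have "(b 1 * poly q x) * (b 1 * poly q 0) > 0" using A by (metis mult_pos_pos)
            hence "b 1 * poly q x > 0" using sgnq0 by (metis less_le_not_le mult_nonpos_nonneg not_le)
            moreover have "x ^ e2 0 > 0" using that by simp
            ultimately have "0 < x ^ e2 0 * (b 1 * poly q x)" by (rule mult_pos_pos[rotated])
            thus ?thesis unfolding pq by (simp add: algebra_simps)
          qed
          define r where "r = Min R"
          have rR: "r \<in> R" unfolding r_def using finR Rne by simp
          have pr: "poly p r = 0" using rR R by auto
          have p0: "poly p 0 = b 0" unfolding p_def using coeff_sp[OF st', of 0 b] e'0
            by (simp add: poly_0_coeff_0)
          obtain xi where xi: "0 < xi" "xi < r" "poly p r - poly p 0 = (r - 0) * poly (pderiv p) xi"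
            using poly_MVT[of 0 r p] minpos r_def by auto
          have "b 1 * poly (pderiv p) xi < 0"
          proof -
            have "b 0 = - r * poly (pderiv p) xi" using xi pr p0 by simp
            hence "b 0 * b 1 = - r * (b 1 * poly (pderiv p) xi)" by simp
            hence "r * (b 1 * poly (pderiv p) xi) < 0" using b01 by linarith
            thus ?thesis using minpos r_def by (simp add: mult_less_0_iff)
          qed
          define x0 where "x0 = min (\<delta>/2) (xi/2)"
          have x0: "0 < x0" "x0 < \<delta>" "x0 < xi" unfolding x0_def using dl xi by auto
          have "b 1 * poly (pderiv p) x0 > 0" using near x0 by auto
          hence "(b 1 * poly (pderiv p) x0) * (b 1 * poly (pderiv p) xi) < 0" using \<open>b 1 * poly (pderiv p) xi < 0\<close>
            by (simp add: mult_pos_neg)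
          hence "(b 1 * b 1) * (poly (pderiv p) x0 * poly (pderiv p) xi) < 0" by (simp add: algebra_simps)
          hence "poly (pderiv p) x0 * poly (pderiv p) xi < 0" using \<open>b 1 \<noteq> 0\<close> by (simp add: mult_less_0_iff)
          from poly_IVT[OF x0(3) this] obtain rho where rho: "x0 < rho" "rho < xi" "poly (pderiv p) rho = 0" by auto
          have "rho \<in> R'" unfolding R'_def using rho x0 by auto
          moreover have "rho \<notin> T" unfolding T_def using rho xi r_def by auto
          ultimately have "insert rho T \<subseteq> R'" using TR' by auto
          hence "card (insert rho T) \<le> card R'" using card_mono[OF finR'] by blast
          moreover have "card (insert rho T) = card T + 1"
            using \<open>rho \<notin> T\<close> finR' TR' by (simp add: finite_subset)
          ultimately show ?thesis using rc IH(2) Vb sgn finR unfolding R'_def by auto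
        qed
      qed
    qed
  qed
qed




lemma strict_list: "sorted_wrt (<) L \<Longrightarrow> strict (\<lambda>k. L ! k) (length L)"
  unfolding strict_def using sorted_wrt_nth_less by blast

lemma sp_of_list:
  fixes p :: "real poly"
  assumes sl: "sorted_wrt (<) L" and supp: "\<forall>n. coeff p n \<noteq> 0 \<longrightarrow> n \<in> set L"
  shows "p = sp (\<lambda>k. L ! k) (\<lambda>k. coeff p (L ! k)) (length L)"
proof (rule poly_eqI)
  fix n
  have st: "strict (\<lambda>k. L ! k) (length L)" using strict_list[OF sl] .
  show "coeff p n = coeff (sp (\<lambda>k. L ! k) (\<lambda>k. coeff p (L ! k)) (length L)) n"
  proof (cases "n \<in> set L")
    case True
    then obtain k where k: "k < length L" "n = L ! k" by (auto simp: in_set_conv_nth)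
    show ?thesis using coeff_sp[OF st k(1)] k by simp
  next
    case False
    hence "n \<notin> (\<lambda>k. L ! k) ` {..<length L}" by (auto simp: in_set_conv_nth)
    hence "coeff (sp (\<lambda>k. L ! k) (\<lambda>k. coeff p (L ! k)) (length L)) n = 0"
      unfolding sp_def by (rule coeff_sum_monom_out)
    thus ?thesis using supp False by auto
  qed
qed

lemma weak_descartes:
  fixes p :: "real poly"
  assumes "p \<noteq> 0"
  shows "finite {x. 0 < x \<and> poly p x = 0} \<and> card {x. 0 < x \<and> poly p x = 0} < card {n. coeff p n \<noteq> 0}"
proof -
  define N where "N = {n. coeff p n \<noteq> 0}"
  have finN: "finite N" unfolding N_def
    by (rule finite_subset[of _ "{..degree p}"]) (auto intro: le_degree)
  define L where "L = sorted_list_of_set N"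
  have sl: "sorted_wrt (<) L" unfolding L_def by simp
  have setL: "set L = N" unfolding L_def using finN by simp
  have lenL: "length L = card N" unfolding L_def using finN by simp
  have "coeff p (degree p) \<noteq> 0" using assms by simp
  hence Nne: "N \<noteq> {}" unfolding N_def by blast
  have K: "0 < length L" using lenL Nne finN by (simp add: card_gt_0_iff)
  have peq: "p = sp (\<lambda>k. L ! k) (\<lambda>k. coeff p (L ! k)) (length L)"
    by (rule sp_of_list[OF sl]) (use setL N_def in auto)
  have bnz: "\<forall>k<length L. coeff p (L ! k) \<noteq> 0"
  proof (intro allI impI)
    fix k assume "k < length L"
    hence "L ! k \<in> set L" by simp
    thus "coeff p (L ! k) \<noteq> 0" using setL unfolding N_def by auto
  qed
  have D: "finite {x. 0 < x \<and> poly p x = 0} \<and> card {x. 0 < x \<and> poly p x = 0} \<le> V (\<lambda>k. coeff p (L ! k)) (length L)"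
  proof -
    have "finite {x::real. 0 < x \<and> poly (sp (\<lambda>k. L ! k) (\<lambda>k. coeff p (L ! k)) (length L)) x = 0} \<and>
      card {x::real. 0 < x \<and> poly (sp (\<lambda>k. L ! k) (\<lambda>k. coeff p (L ! k)) (length L)) x = 0} \<le> V (\<lambda>k. coeff p (L ! k)) (length L)"
      by (rule descartes_sparse[rule_format, OF strict_list[OF sl] bnz[rule_format] K])
    thus ?thesis by (simp only: peq[symmetric])
  qed
  have "V (\<lambda>k. coeff p (L ! k)) (length L) \<le> length L - 1" by (rule V_le)
  thus ?thesis using D K lenL unfolding N_def by linarith
qed

lemma roots_lower:
  fixes p :: "real poly"
  assumes "p \<noteq> 0" "finite A" "\<forall>a\<in>A. 0 < a \<and> poly p a = 0"
  shows "card A < card {n. coeff p n \<noteq> 0}"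
proof -
  have "card A \<le> card {x. 0 < x \<and> poly p x = 0}"
    using weak_descartes[OF assms(1)] assms(3) by (intro card_mono) auto
  thus ?thesis using weak_descartes[OF assms(1)] by linarith
qed

lemma exists_vanish:
  "\<forall>D (A::real set). finite D \<and> card D = Suc K \<and> finite A \<and> card A = K \<and> (\<forall>a\<in>A. 0 < a) \<longrightarrow>
     (\<exists>h. h \<noteq> 0 \<and> (\<forall>n. coeff h n \<noteq> 0 \<longrightarrow> n \<in> D) \<and> (\<forall>a\<in>A. poly h a = 0))"
proof (induction K)
  case 0
  show ?case
  proof (intro allI impI)
    fix D :: "nat set" and A :: "real set"
    assume a: "finite D \<and> card D = Suc 0 \<and> finite A \<and> card A = 0 \<and> (\<forall>a\<in>A. 0 < a)"
    then obtain d where "D = {d}" using card_1_singletonE[of D] by auto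
    moreover have "A = {}" using a by auto
    ultimately show "\<exists>h. h \<noteq> 0 \<and> (\<forall>n. coeff h n \<noteq> 0 \<longrightarrow> n \<in> D) \<and> (\<forall>a\<in>A. poly h a = 0)"
      by (intro exI[of _ "monom 1 d"]) (auto simp: coeff_monom)
  qed
next
  case (Suc K)
  show ?case
  proof (intro allI impI)
    fix D :: "nat set" and A :: "real set"
    assume a: "finite D \<and> card D = Suc (Suc K) \<and> finite A \<and> card A = Suc K \<and> (\<forall>a\<in>A. 0 < a)"
    then obtain a0 where a0: "a0 \<in> A" by (metis card.empty ex_in_conv nat.distinct(1))
    define A0 where "A0 = A - {a0}"
    have A0: "finite A0" "card A0 = K" "\<forall>a\<in>A0. 0 < a" using a a0 unfolding A0_def by auto
    obtain x where x: "x \<in> D" using a by (metis card.empty ex_in_conv nat.distinct(1))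
    have "card (D - {x}) = Suc K" using a x by auto
    then obtain y where y: "y \<in> D - {x}" by (metis card.empty ex_in_conv nat.distinct(1))
    have cx: "finite (D - {x}) \<and> card (D - {x}) = Suc K" using a x by auto
    have cy: "finite (D - {y}) \<and> card (D - {y}) = Suc K" using a y by auto
    obtain h1 where h1: "h1 \<noteq> 0" "\<forall>n. coeff h1 n \<noteq> 0 \<longrightarrow> n \<in> D - {x}" "\<forall>a\<in>A0. poly h1 a = 0"
      using Suc.IH cx A0 by blast
    obtain h2 where h2: "h2 \<noteq> 0" "\<forall>n. coeff h2 n \<noteq> 0 \<longrightarrow> n \<in> D - {y}" "\<forall>a\<in>A0. poly h2 a = 0"
      using Suc.IH cy A0 by blast
    have Aeq: "A = insert a0 A0" using a0 unfolding A0_def by auto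
    show "\<exists>h. h \<noteq> 0 \<and> (\<forall>n. coeff h n \<noteq> 0 \<longrightarrow> n \<in> D) \<and> (\<forall>a\<in>A. poly h a = 0)"
    proof (cases "poly h1 a0 = 0")
      case True
      thus ?thesis using h1 Aeq by (intro exI[of _ h1]) auto
    next
      case n1: False
      show ?thesis
      proof (cases "poly h2 a0 = 0")
        case True
        thus ?thesis using h2 Aeq by (intro exI[of _ h2]) auto
      next
        case n2: False
        have cx2: "coeff h2 x \<noteq> 0"
        proof
          assume c0: "coeff h2 x = 0"
          have sub: "{n. coeff h2 n \<noteq> 0} \<subseteq> D - {x} - {y}" using h2(2) c0 by auto
          have "card (D - {x} - {y}) = K" using cx y by auto
          hence "card {n. coeff h2 n \<noteq> 0} \<le> K" using card_mono[OF _ sub] a by (metis finite_Diff)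
          moreover have "card A0 < card {n. coeff h2 n \<noteq> 0}"
            using roots_lower[OF h2(1) A0(1)] A0(3) h2(3) by auto
          ultimately show False using A0(2) by linarith
        qed
        define h where "h = smult (poly h2 a0) h1 - smult (poly h1 a0) h2"
        have "coeff h x = - poly h1 a0 * coeff h2 x" unfolding h_def using h1(2) by auto
        hence "h \<noteq> 0" using n1 cx2 by auto
        moreover have "\<forall>n. coeff h n \<noteq> 0 \<longrightarrow> n \<in> D"
        proof (intro allI impI)
          fix n assume "coeff h n \<noteq> 0"
          hence "coeff h1 n \<noteq> 0 \<or> coeff h2 n \<noteq> 0" unfolding h_def by auto
          thus "n \<in> D" using h1(2) h2(2) by blast
        qed
        moreover have "\<forall>a\<in>A. poly h a = 0" unfolding h_def using h1(3) h2(3) Aeq by auto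
        ultimately show ?thesis by blast
      qed
    qed
  qed
qed




definition runsS :: "nat set \<Rightarrow> nat set set" where
  "runsS F = {{a..b} | a b. a \<le> b \<and> {a..b} \<subseteq> F \<and> (0 < a \<longrightarrow> a - 1 \<notin> F) \<and> b + 1 \<notin> F}"

lemma ssupp_of_supp[simp]: "ssupp (of_supp A) = A"
  unfolding ssupp_def of_supp_def by auto

lemma runs_runsS: "runs s = runsS (ssupp s)"
  unfolding runs_def runsS_def ..

lemma runsS_E:
  assumes "X \<in> runsS F"
  obtains a b where "X = {a..b}" "a \<le> b" "{a..b} \<subseteq> F" "0 < a \<longrightarrow> a - 1 \<notin> F" "b + 1 \<notin> F"
proof -
  from assms obtain a b where "X = {a..b}" "a \<le> b" "{a..b} \<subseteq> F" "(0 < a \<longrightarrow> a - 1 \<notin> F)" "b + 1 \<notin> F"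
    unfolding runsS_def by blast
  thus ?thesis using that by blast
qed

lemma runsS_I:
  "a \<le> b \<Longrightarrow> {a..b} \<subseteq> F \<Longrightarrow> (0 < a \<Longrightarrow> a - 1 \<notin> F) \<Longrightarrow> b + 1 \<notin> F \<Longrightarrow> {a..b} \<in> runsS F"
  unfolding runsS_def by blast

lemma Max_ival[simp]: "(a::nat) \<le> b \<Longrightarrow> Max {a..b} = b"
  by (rule Max_eqI) auto

lemma Min_ival[simp]: "(a::nat) \<le> b \<Longrightarrow> Min {a..b} = a"
  by (rule Min_eqI) auto

lemma runsS_sub: "X \<in> runsS F \<Longrightarrow> X \<subseteq> F"
  by (erule runsS_E) auto

lemma runsS_finite: "finite F \<Longrightarrow> finite (runsS F)"
  by (rule finite_subset[of _ "Pow F"]) (auto dest: runsS_sub)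

lemma runsS_disj:
  assumes X: "X \<in> runsS F" and Y: "Y \<in> runsS F" and ne: "X \<inter> Y \<noteq> {}"
  shows "X = Y"
proof -
  obtain a b where ab: "X = {a..b}" "a \<le> b" "{a..b} \<subseteq> F" "0 < a \<longrightarrow> a - 1 \<notin> F" "b + 1 \<notin> F"
    using X by (rule runsS_E)
  obtain c d where cd: "Y = {c..d}" "c \<le> d" "{c..d} \<subseteq> F" "0 < c \<longrightarrow> c - 1 \<notin> F" "d + 1 \<notin> F"
    using Y by (rule runsS_E)
  have ov: "c \<le> b" "a \<le> d" using ne ab cd by auto
  have "a = c"
  proof (rule ccontr)
    assume "a \<noteq> c"
    then consider "a < c" | "c < a" by linarith
    then show False
    proof cases
      case 1
      hence "c - 1 \<in> {a..b}" using ov by auto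
      thus False using ab cd 1 by auto
    next
      case 2
      hence "a - 1 \<in> {c..d}" using ov by auto
      thus False using ab cd 2 by auto
    qed
  qed
  moreover have "b = d"
  proof (rule ccontr)
    assume "b \<noteq> d"
    then consider "b < d" | "d < b" by linarith
    then show False
    proof cases
      case 1
      hence "b + 1 \<in> {c..d}" using ov \<open>a = c\<close> ab by auto
      thus False using ab cd by auto
    next
      case 2
      hence "d + 1 \<in> {a..b}" using ov \<open>a = c\<close> cd by auto
      thus False using ab cd by auto
    qed
  qed
  ultimately show ?thesis using ab cd by simp
qed

lemma runsS_cover:
  assumes fin: "finite F" and x: "x \<in> F"
  shows "\<exists>X\<in>runsS F. x \<in> X"
proof -
  have exb: "\<exists>b. x \<le> b \<and> b + 1 \<notin> F"
  proof (intro exI conjI)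
    show "x \<le> Max F" using fin x by simp
    show "Max F + 1 \<notin> F"
    proof
      assume "Max F + 1 \<in> F"
      hence "Max F + 1 \<le> Max F" by (rule Max_ge[OF fin])
      thus False by simp
    qed
  qed
  define b where "b = (LEAST b. x \<le> b \<and> b + 1 \<notin> F)"
  have b: "x \<le> b" "b + 1 \<notin> F" unfolding b_def using LeastI_ex[OF exb] by auto
  have bmin: "y + 1 \<in> F" if "x \<le> y" "y < b" for y
  proof (rule ccontr)
    assume "y + 1 \<notin> F"
    hence "b \<le> y" unfolding b_def using that by (intro Least_le) auto
    thus False using that by auto
  qed
  have upk: "x + k \<le> b \<longrightarrow> x + k \<in> F" for k
  proof (induction k)
    case 0 thus ?case using x by simp
  next
    case (Suc k)
    show ?case
    proof
      assume "x + Suc k \<le> b"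
      hence "x + k \<in> F" "x + k < b" using Suc by auto
      thus "x + Suc k \<in> F" using bmin[of "x + k"] by auto
    qed
  qed
  have up: "{x..b} \<subseteq> F"
  proof
    fix y assume "y \<in> {x..b}"
    hence le: "x + (y - x) \<le> b" and xy: "x \<le> y" by auto
    have "x + (y - x) \<in> F" using upk[of "y - x"] le by blast
    thus "y \<in> F" using xy by simp
  qed
  define a where "a = (LEAST a. {a..x} \<subseteq> F)"
  have exa: "\<exists>a. {a..x} \<subseteq> F" using x by (intro exI[of _ x]) auto
  have a: "{a..x} \<subseteq> F" unfolding a_def using LeastI_ex[OF exa] .
  have ax: "a \<le> x" unfolding a_def by (rule Least_le) (use x in auto)
  have amin: "0 < a \<Longrightarrow> a - 1 \<notin> F"
  proof
    assume "0 < a" "a - 1 \<in> F"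
    have "{a - 1..x} \<subseteq> F"
    proof
      fix y assume y: "y \<in> {a - 1..x}"
      show "y \<in> F"
      proof (cases "y = a - 1")
        case True thus ?thesis using \<open>a - 1 \<in> F\<close> by simp
      next
        case False hence "y \<in> {a..x}" using y by auto
        thus ?thesis using a by auto
      qed
    qed
    hence "a \<le> a - 1" unfolding a_def by (rule Least_le)
    thus False using \<open>0 < a\<close> by simp
  qed
  have "{a..b} \<subseteq> F"
  proof
    fix y assume "y \<in> {a..b}"
    thus "y \<in> F" using a up by (cases "y \<le> x") auto
  qed
  hence "{a..b} \<in> runsS F" using ax b amin by (intro runsS_I) (auto simp del: One_nat_def)
  moreover have "x \<in> {a..b}" using ax b by auto
  ultimately show ?thesis by blast
qed

lemma runsS_Union: "finite F \<Longrightarrow> \<Union>(runsS F) = F"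
  using runsS_cover runsS_sub by blast

lemma card_by_runs:
  assumes fin: "finite F" and sub: "A \<subseteq> F"
  shows "card A = (\<Sum>X\<in>runsS F. card (A \<inter> X))"
proof -
  have "A = (\<Union>X\<in>runsS F. A \<inter> X)" using runsS_Union[OF fin] sub by blast
  hence "card A = card (\<Union>X\<in>runsS F. A \<inter> X)" by simp
  also have "\<dots> = (\<Sum>X\<in>runsS F. card (A \<inter> X))"
  proof (rule card_UN_disjoint)
    show "finite (runsS F)" using runsS_finite[OF fin] .
    show "\<forall>X\<in>runsS F. finite (A \<inter> X)" using fin sub by (auto intro: finite_subset)
    show "\<forall>X\<in>runsS F. \<forall>Y\<in>runsS F. X \<noteq> Y \<longrightarrow> A \<inter> X \<inter> (A \<inter> Y) = {}"
      using runsS_disj by blast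
  qed
  finally show ?thesis .
qed

lemma runs_gap:
  assumes X: "X \<in> runsS F" and Y: "Y \<in> runsS F" and ne: "X \<noteq> Y"
  shows "Max X + 1 < Min Y \<or> Max Y + 1 < Min X"
proof -
  obtain a b where ab: "X = {a..b}" "a \<le> b" "{a..b} \<subseteq> F" "0 < a \<longrightarrow> a - 1 \<notin> F" "b + 1 \<notin> F"
    using X by (rule runsS_E)
  obtain c d where cd: "Y = {c..d}" "c \<le> d" "{c..d} \<subseteq> F" "0 < c \<longrightarrow> c - 1 \<notin> F" "d + 1 \<notin> F"
    using Y by (rule runsS_E)
  have disj: "X \<inter> Y = {}" using runsS_disj X Y ne by blast
  have "c \<in> F" "a \<in> F" using ab cd by auto
  have "b + 1 < c \<or> d + 1 < a"
  proof (cases "b < c")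
    case True
    moreover have "b + 1 \<noteq> c" using \<open>c \<in> F\<close> ab by auto
    ultimately show ?thesis by linarith
  next
    case False
    hence "c < a" using disj ab cd by (metis atLeastAtMost_iff disjoint_iff not_le order_refl)
    have "d < a"
    proof (rule ccontr)
      assume "\<not> d < a"
      hence "a \<in> X \<inter> Y" using ab cd \<open>c < a\<close> by auto
      thus False using disj by auto
    qed
    moreover have "d + 1 \<noteq> a" using \<open>a \<in> F\<close> cd by auto
    ultimately show ?thesis by linarith
  qed
  thus ?thesis using ab cd by simp
qed

definition wt :: "nat set \<Rightarrow> nat" where
  "wt X = (if 0 \<in> X then card X else if odd (card X) then card X + 1 else card X)"

definition Cset :: "nat set \<Rightarrow> nat set" where
  "Cset F = \<Union>(ceilI ` runsS F)"

definition Fset :: "nat set \<Rightarrow> nat set" where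
  "Fset F = \<Union>(floorI ` runsS F)"

definition Wt :: "nat set \<Rightarrow> nat" where
  "Wt F = (\<Sum>X\<in>runsS F. wt X)"

lemma ceil_ival: "a \<le> b \<Longrightarrow> ceilI {a..b} = {a..(if 0 < a \<and> odd (b + 1 - a) then b + 1 else b)}"
  unfolding ceilI_def by (auto simp: atLeastAtMostSuc_conv)

lemma floor_ival: "a \<le> b \<Longrightarrow> floorI {a..b} = {(if 0 < a \<and> odd (b + 1 - a) then a - 1 else a)..b}"
proof -
  assume ab: "a \<le> b"
  show ?thesis
  proof (cases "0 < a \<and> odd (b + 1 - a)")
    case True
    hence "insert (a - 1) {a..b} = {a - 1..b}" using ab by (auto simp: atLeastAtMost_iff)
    thus ?thesis unfolding floorI_def using True ab by auto
  next
    case False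
    thus ?thesis unfolding floorI_def using ab by auto
  qed
qed

lemma wt_ival: "a \<le> b \<Longrightarrow> wt {a..b} = (if 0 < a \<and> odd (b + 1 - a) then b + 2 - a else b + 1 - a)"
  unfolding wt_def by auto

lemma card_ceil: "a \<le> b \<Longrightarrow> card (ceilI {a..b}) = wt {a..b}"
  by (simp add: ceil_ival wt_ival)

lemma card_floor: "a \<le> b \<Longrightarrow> card (floorI {a..b}) = wt {a..b}"
  by (auto simp: floor_ival wt_ival)

lemma sub_ceil: "a \<le> b \<Longrightarrow> {a..b} \<subseteq> ceilI {a..b}"
  by (auto simp: ceil_ival)

lemma sub_floor: "a \<le> b \<Longrightarrow> {a..b} \<subseteq> floorI {a..b}"
  by (auto simp: floor_ival)

lemma ceil_range: "a \<le> b \<Longrightarrow> ceilI {a..b} \<subseteq> {a..b+1}"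
  by (auto simp: ceil_ival)

lemma floor_range: "a \<le> b \<Longrightarrow> floorI {a..b} \<subseteq> {a-1..b}"
  by (auto simp: floor_ival)

lemma F_sub_Cset: "finite F \<Longrightarrow> F \<subseteq> Cset F"
proof
  fix x assume "finite F" "x \<in> F"
  then obtain X where X: "X \<in> runsS F" "x \<in> X" using runsS_cover by blast
  then obtain a b where "X = {a..b}" "a \<le> b" by (auto elim: runsS_E)
  thus "x \<in> Cset F" unfolding Cset_def using X sub_ceil by blast
qed

lemma F_sub_Fset: "finite F \<Longrightarrow> F \<subseteq> Fset F"
proof
  fix x assume "finite F" "x \<in> F"
  then obtain X where X: "X \<in> runsS F" "x \<in> X" using runsS_cover by blast
  then obtain a b where "X = {a..b}" "a \<le> b" by (auto elim: runsS_E)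
  thus "x \<in> Fset F" unfolding Fset_def using X sub_floor by blast
qed

lemma card_Cset: assumes fin: "finite F" shows "card (Cset F) = Wt F"
  unfolding Cset_def Wt_def
proof (subst card_UN_disjoint)
  show "finite (runsS F)" using runsS_finite[OF fin] .
  show "\<forall>X\<in>runsS F. finite (ceilI X)"
  proof
    fix X assume "X \<in> runsS F"
    then obtain a b where ab: "X = {a..b}" "a \<le> b" by (auto elim: runsS_E)
    show "finite (ceilI X)" unfolding ab(1) by (rule finite_subset[OF ceil_range[OF ab(2)]]) simp
  qed
  show "\<forall>X\<in>runsS F. \<forall>Y\<in>runsS F. X \<noteq> Y \<longrightarrow> ceilI X \<inter> ceilI Y = {}"
  proof (intro ballI impI)
    fix X Y assume XY: "X \<in> runsS F" "Y \<in> runsS F" "X \<noteq> Y"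
    obtain a b where ab: "X = {a..b}" "a \<le> b" using XY(1) by (auto elim: runsS_E)
    obtain c d where cd: "Y = {c..d}" "c \<le> d" using XY(2) by (auto elim: runsS_E)
    have "b + 1 < c \<or> d + 1 < a" using runs_gap[OF XY] ab cd by simp
    hence "{a..b+1} \<inter> {c..d+1} = {}" by auto
    thus "ceilI X \<inter> ceilI Y = {}" using ceil_range[OF ab(2)] ceil_range[OF cd(2)] ab cd by blast
  qed
  show "(\<Sum>X\<in>runsS F. card (ceilI X)) = (\<Sum>X\<in>runsS F. wt X)"
    by (rule sum.cong) (auto elim!: runsS_E simp: card_ceil)
qed

lemma card_Fset: assumes fin: "finite F" shows "card (Fset F) = Wt F"
  unfolding Fset_def Wt_def
proof (subst card_UN_disjoint)
  show "finite (runsS F)" using runsS_finite[OF fin] .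
  show "\<forall>X\<in>runsS F. finite (floorI X)"
  proof
    fix X assume "X \<in> runsS F"
    then obtain a b where ab: "X = {a..b}" "a \<le> b" by (auto elim: runsS_E)
    show "finite (floorI X)" unfolding ab(1) by (rule finite_subset[OF floor_range[OF ab(2)]]) simp
  qed
  show "\<forall>X\<in>runsS F. \<forall>Y\<in>runsS F. X \<noteq> Y \<longrightarrow> floorI X \<inter> floorI Y = {}"
  proof (intro ballI impI)
    fix X Y assume XY: "X \<in> runsS F" "Y \<in> runsS F" "X \<noteq> Y"
    obtain a b where ab: "X = {a..b}" "a \<le> b" using XY(1) by (auto elim: runsS_E)
    obtain c d where cd: "Y = {c..d}" "c \<le> d" using XY(2) by (auto elim: runsS_E)
    have "b + 1 < c \<or> d + 1 < a" using runs_gap[OF XY] ab cd by simp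
    hence "{a-1..b} \<inter> {c-1..d} = {}" by auto
    thus "floorI X \<inter> floorI Y = {}" using floor_range[OF ab(2)] floor_range[OF cd(2)] ab cd by blast
  qed
  show "(\<Sum>X\<in>runsS F. card (floorI X)) = (\<Sum>X\<in>runsS F. wt X)"
    by (rule sum.cong) (auto elim!: runsS_E simp: card_floor)
qed

lemma finite_Cset: "finite F \<Longrightarrow> finite (Cset F)"
  unfolding Cset_def
proof (rule finite_Union)
  assume fin: "finite F"
  show "finite (ceilI ` runsS F)" using runsS_finite[OF fin] by simp
  show "\<And>M. M \<in> ceilI ` runsS F \<Longrightarrow> finite M"
  proof -
    fix M assume "M \<in> ceilI ` runsS F"
    then obtain X where X: "X \<in> runsS F" "M = ceilI X" by auto
    then obtain a b where ab: "X = {a..b}" "a \<le> b" by (auto elim: runsS_E)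
    show "finite M" unfolding X(2) ab(1) by (rule finite_subset[OF ceil_range[OF ab(2)]]) simp
  qed
qed

lemma sceil_eq: "sceil s = of_supp (Cset (ssupp s))"
  unfolding sceil_def Cset_def runs_runsS ..

lemma sfloor_eq: "sfloor s = of_supp (Fset (ssupp s))"
  unfolding sfloor_def Fset_def runs_runsS ..

lemma nocons_card:
  assumes sub: "A \<subseteq> {a..b}" and nc: "\<forall>x\<in>A. Suc x \<notin> A"
  shows "card A \<le> (b + 2 - a) div 2"
proof -
  define g where "g x = (x - a) div 2" for x
  have inj: "inj_on g A"
  proof (rule inj_onI)
    fix x y assume xy: "x \<in> A" "y \<in> A" "g x = g y"
    show "x = y"
    proof (rule ccontr)
      assume "x \<noteq> y"
      then consider "x < y" | "y < x" by linarith
      thus False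
      proof cases
        case 1
        have "y \<noteq> Suc x" using nc xy by auto
        hence "x + 2 \<le> y" using 1 by linarith
        moreover have "a \<le> x" using sub xy by auto
        ultimately have "g x < g y" unfolding g_def by linarith
        thus False using xy by simp
      next
        case 2
        have "x \<noteq> Suc y" using nc xy by auto
        hence "y + 2 \<le> x" using 2 by linarith
        moreover have "a \<le> y" using sub xy by auto
        ultimately have "g y < g x" unfolding g_def by linarith
        thus False using xy by simp
      qed
    qed
  qed
  have img: "g ` A \<subseteq> {..< (b + 2 - a) div 2}"
  proof
    fix z assume "z \<in> g ` A"
    then obtain x where x: "x \<in> A" "z = g x" by auto
    hence "a \<le> x" "x \<le> b" using sub by auto
    thus "z \<in> {..< (b + 2 - a) div 2}" unfolding x(2) g_def by auto
  qed
  have "card A = card (g ` A)" using card_image[OF inj] by simp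
  also have "\<dots> \<le> card {..< (b + 2 - a) div 2}" by (rule card_mono[OF _ img]) simp
  finally show ?thesis by simp
qed

definition SCpairs :: "(nat \<Rightarrow> sgnsym) \<Rightarrow> (nat \<times> nat) set" where
  "SCpairs t = {(i, j). i < j \<and> {t i, t j} = {Neg, Pos} \<and> (\<forall>k. i < k \<and> k < j \<longrightarrow> t k = Zer)}"

lemma SC_pairs: "SC t = card (SCpairs t)"
  unfolding SC_def SCpairs_def ..

lemma pair_cases: "{x, y} = {Neg, Pos} \<longleftrightarrow> (x = Neg \<and> y = Pos) \<or> (x = Pos \<and> y = Neg)"
  by (cases x; cases y) (auto simp: doubleton_eq_iff)

lemma arith_run1: "(a::nat) \<le> b \<Longrightarrow> 0 < a \<Longrightarrow> (b + 2 - a) div 2 + (b + 2 - a) div 2 \<le> (if odd (b + 1 - a) then b + 2 - a else b + 1 - a)"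
  by presburger

lemma arith_run0: "((b::nat) + 2 - 0) div 2 + (b + 2 - 1) div 2 \<le> b + 1 - (0::nat)"
  by presburger

lemma SC_upper:
  assumes fin: "finite F" and pos: "\<forall>i. t i = Pos \<longrightarrow> i \<in> F"
  shows "SC t \<le> Wt F"
proof -
  define Q where "Q = {i. t i = Pos}"
  define Q1 where "Q1 = {j\<in>Q. 0 < j \<and> j - 1 \<notin> Q}"
  define Q2 where "Q2 = {i\<in>Q. Suc i \<notin> Q}"
  define P where "P = SCpairs t"
  define P1 where "P1 = {p\<in>P. t (snd p) = Pos}"
  define P2 where "P2 = {p\<in>P. t (fst p) = Pos}"
  have QF: "Q \<subseteq> F" unfolding Q_def using pos by auto
  have Q1F: "Q1 \<subseteq> F" "Q2 \<subseteq> F" unfolding Q1_def Q2_def using QF by auto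
  have finQ: "finite Q1" "finite Q2" using Q1F fin by (auto intro: finite_subset)
  have PU: "P \<subseteq> P1 \<union> P2"
  proof
    fix p assume "p \<in> P"
    then obtain i j where "p = (i, j)" "{t i, t j} = {Neg, Pos}" unfolding P_def SCpairs_def by auto
    thus "p \<in> P1 \<union> P2" using \<open>p \<in> P\<close> unfolding P1_def P2_def pair_cases by auto
  qed
  have inj1: "inj_on snd P1"
  proof (rule inj_onI)
    fix p q assume pq: "p \<in> P1" "q \<in> P1" "snd p = snd q"
    obtain i j where p: "p = (i, j)" by fastforce
    obtain i' where q: "q = (i', j)" using pq(3) p by (metis prod.collapse snd_conv)
    have ip: "i < j" "{t i, t j} = {Neg, Pos}" "\<forall>k. i < k \<and> k < j \<longrightarrow> t k = Zer"
      using pq(1) unfolding p P1_def P_def SCpairs_def by auto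
    have iq: "i' < j" "{t i', t j} = {Neg, Pos}" "\<forall>k. i' < k \<and> k < j \<longrightarrow> t k = Zer"
      using pq(2) unfolding q P1_def P_def SCpairs_def by auto
    have "t i \<noteq> Zer" "t i' \<noteq> Zer" using ip(2) iq(2) unfolding pair_cases by auto
    have "i = i'"
    proof (rule ccontr)
      assume "i \<noteq> i'"
      then consider "i < i'" | "i' < i" by linarith
      thus False
      proof cases
        case 1 thus False using ip(3) iq(1) \<open>t i' \<noteq> Zer\<close> by auto
      next
        case 2 thus False using iq(3) ip(1) \<open>t i \<noteq> Zer\<close> by auto
      qed
    qed
    thus "p = q" using p q by simp
  qed
  have inj2: "inj_on fst P2"
  proof (rule inj_onI)
    fix p q assume pq: "p \<in> P2" "q \<in> P2" "fst p = fst q"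
    obtain i j where p: "p = (i, j)" by fastforce
    obtain j' where q: "q = (i, j')" using pq(3) p by (metis prod.collapse fst_conv)
    have ip: "i < j" "{t i, t j} = {Neg, Pos}" "\<forall>k. i < k \<and> k < j \<longrightarrow> t k = Zer"
      using pq(1) unfolding p P2_def P_def SCpairs_def by auto
    have iq: "i < j'" "{t i, t j'} = {Neg, Pos}" "\<forall>k. i < k \<and> k < j' \<longrightarrow> t k = Zer"
      using pq(2) unfolding q P2_def P_def SCpairs_def by auto
    have "t j \<noteq> Zer" "t j' \<noteq> Zer" using ip(2) iq(2) unfolding pair_cases by auto
    have "j = j'"
    proof (rule ccontr)
      assume "j \<noteq> j'"
      then consider "j < j'" | "j' < j" by linarith
      thus False
      proof cases
        case 1 thus False using iq(3) ip(1) \<open>t j \<noteq> Zer\<close> by auto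
      next
        case 2 thus False using ip(3) iq(1) \<open>t j' \<noteq> Zer\<close> by auto
      qed
    qed
    thus "p = q" using p q by simp
  qed
  have img1: "snd ` P1 \<subseteq> Q1"
  proof
    fix j assume "j \<in> snd ` P1"
    then obtain i where ij: "(i, j) \<in> P1" by force
    have ip: "i < j" "t j = Pos" "{t i, t j} = {Neg, Pos}" "\<forall>k. i < k \<and> k < j \<longrightarrow> t k = Zer"
      using ij unfolding P1_def P_def SCpairs_def by auto
    have "t i = Neg" using ip(2,3) unfolding pair_cases by auto
    have "t (j - 1) \<noteq> Pos"
    proof (cases "j - 1 = i")
      case True thus ?thesis using \<open>t i = Neg\<close> by simp
    next
      case False hence "i < j - 1" "j - 1 < j" using ip(1) by auto
      thus ?thesis using ip(4) by auto
    qed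
    thus "j \<in> Q1" unfolding Q1_def Q_def using ip by auto
  qed
  have img2: "fst ` P2 \<subseteq> Q2"
  proof
    fix i assume "i \<in> fst ` P2"
    then obtain j where ij: "(i, j) \<in> P2" by force
    have ip: "i < j" "t i = Pos" "{t i, t j} = {Neg, Pos}" "\<forall>k. i < k \<and> k < j \<longrightarrow> t k = Zer"
      using ij unfolding P2_def P_def SCpairs_def by auto
    have "t j = Neg" using ip(2,3) unfolding pair_cases by auto
    have "t (Suc i) \<noteq> Pos"
    proof (cases "Suc i = j")
      case True thus ?thesis using \<open>t j = Neg\<close> by simp
    next
      case False hence "i < Suc i" "Suc i < j" using ip(1) by auto
      thus ?thesis using ip(4) by auto
    qed
    thus "i \<in> Q2" unfolding Q2_def Q_def using ip by auto
  qed
  have c1: "card P1 \<le> card Q1"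
  proof -
    have "card P1 = card (snd ` P1)" using card_image[OF inj1] by simp
    also have "\<dots> \<le> card Q1" by (rule card_mono[OF finQ(1) img1])
    finally show ?thesis .
  qed
  have c2: "card P2 \<le> card Q2"
  proof -
    have "card P2 = card (fst ` P2)" using card_image[OF inj2] by simp
    also have "\<dots> \<le> card Q2" by (rule card_mono[OF finQ(2) img2])
    finally show ?thesis .
  qed
  have finP1: "finite P1" using finite_imageD[OF finite_subset[OF img1 finQ(1)] inj1] .
  have finP2: "finite P2" using finite_imageD[OF finite_subset[OF img2 finQ(2)] inj2] .
  have "card P \<le> card (P1 \<union> P2)" by (rule card_mono[OF _ PU]) (use finP1 finP2 in simp)
  also have "\<dots> \<le> card P1 + card P2" by (rule card_Un_le)
  also have "\<dots> \<le> card Q1 + card Q2" using c1 c2 by linarith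
  also have "\<dots> = (\<Sum>X\<in>runsS F. card (Q1 \<inter> X) + card (Q2 \<inter> X))"
    using card_by_runs[OF fin Q1F(1)] card_by_runs[OF fin Q1F(2)] by (simp add: sum.distrib)
  also have "\<dots> \<le> (\<Sum>X\<in>runsS F. wt X)"
  proof (rule sum_mono)
    fix X assume X: "X \<in> runsS F"
    then obtain a b where ab: "X = {a..b}" "a \<le> b" by (auto elim: runsS_E)
    have nc1: "\<forall>x\<in>Q1 \<inter> X. Suc x \<notin> Q1 \<inter> X" unfolding Q1_def by auto
    have nc2: "\<forall>x\<in>Q2 \<inter> X. Suc x \<notin> Q2 \<inter> X" unfolding Q2_def by auto
    have b2: "card (Q2 \<inter> X) \<le> (b + 2 - a) div 2" by (rule nocons_card[OF _ nc2]) (use ab in auto)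
    show "card (Q1 \<inter> X) + card (Q2 \<inter> X) \<le> wt X"
    proof (cases "a = 0")
      case True
      have "card (Q1 \<inter> X) \<le> (b + 2 - 1) div 2" by (rule nocons_card[OF _ nc1]) (use ab True in \<open>auto simp: Q1_def\<close>)
      moreover have "wt X = b + 1" using ab True by (simp add: wt_ival)
      ultimately show ?thesis using b2 True arith_run0[of b] by linarith
    next
      case False
      have "card (Q1 \<inter> X) \<le> (b + 2 - a) div 2" by (rule nocons_card[OF _ nc1]) (use ab in auto)
      moreover have "wt X = (if odd (b + 1 - a) then b + 2 - a else b + 1 - a)" using ab False by (simp add: wt_ival)
      ultimately show ?thesis using b2 False arith_run1[of a b] ab by linarith
    qed
  qed
  finally show ?thesis unfolding SC_pairs P_def Wt_def .
qed

lemma card_even_pos: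
  assumes "(a::nat) \<le> b"
  shows "card {i\<in>{a..b}. even (b - i)} = (b - a) div 2 + 1"
proof -
  have eq: "{i\<in>{a..b}. even (b - i)} = (\<lambda>k. b - 2 * k) ` {..(b - a) div 2}"
  proof
    show "{i\<in>{a..b}. even (b - i)} \<subseteq> (\<lambda>k. b - 2 * k) ` {..(b - a) div 2}"
    proof
      fix i assume i: "i \<in> {i\<in>{a..b}. even (b - i)}"
      hence "i = b - 2 * ((b - i) div 2)" "(b - i) div 2 \<le> (b - a) div 2" by auto
      thus "i \<in> (\<lambda>k. b - 2 * k) ` {..(b - a) div 2}" by blast
    qed
    show "(\<lambda>k. b - 2 * k) ` {..(b - a) div 2} \<subseteq> {i\<in>{a..b}. even (b - i)}"
    proof
      fix i assume "i \<in> (\<lambda>k. b - 2 * k) ` {..(b - a) div 2}"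
      then obtain k where k: "k \<le> (b - a) div 2" "i = b - 2 * k" by auto
      hence "2 * k \<le> b - a" by linarith
      hence "a \<le> i" "i \<le> b" "b - i = 2 * k" using k assms by auto
      moreover have "even (b - i)" by (simp only: \<open>b - i = 2 * k\<close>) simp
      ultimately show "i \<in> {i\<in>{a..b}. even (b - i)}" unfolding mem_Collect_eq atLeastAtMost_iff by blast
    qed
  qed
  have inj: "inj_on (\<lambda>k. b - 2 * k) {..(b - a) div 2}"
  proof (rule inj_onI)
    fix x y assume "x \<in> {..(b - a) div 2}" "y \<in> {..(b - a) div 2}" "b - 2 * x = b - 2 * y"
    thus "x = y" by auto
  qed
  show ?thesis unfolding eq card_image[OF inj] by simp
qed

lemma arith_low0: "(b - (0::nat)) div 2 + 1 + ((b - 0) div 2 + 1 - (if even b then 1 else 0)) = b + 1"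
  by presburger

lemma arith_low1: "(a::nat) \<le> b \<Longrightarrow> 0 < a \<Longrightarrow> (b - a) div 2 + 1 + ((b - a) div 2 + 1) = (if odd (b + 1 - a) then b + 2 - a else b + 1 - a)"
  by presburger

lemma SC_lower:
  assumes fin: "finite F"
  shows "\<exists>t. t \<in> SS \<and> (\<forall>i. t i = Pos \<longrightarrow> i \<in> F) \<and> Wt F \<le> SC t"
proof (cases "F = {}")
  case True
  have "runsS F = {}" using True by (auto dest: runsS_sub elim!: runsS_E)
  hence "Wt F = 0" unfolding Wt_def by simp
  moreover have "(\<lambda>_. Zer) \<in> SS" unfolding SS_def ssupp_def by simp
  ultimately show ?thesis by (intro exI[of _ "\<lambda>_. Zer"]) auto
next
  case Fne: False
  define M where "M = Max F"
  define P where "P = (\<Union>X\<in>runsS F. {i\<in>X. even (Max X - i)})"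
  have PF: "P \<subseteq> F" unfolding P_def by (auto dest: runsS_sub)
  have PM: "\<forall>i\<in>P. i \<le> M" using PF fin unfolding M_def by auto
  have PX: "P \<inter> X = {i\<in>X. even (Max X - i)}" if X: "X \<in> runsS F" for X
  proof
    show "P \<inter> X \<subseteq> {i\<in>X. even (Max X - i)}"
    proof
      fix i assume "i \<in> P \<inter> X"
      then obtain Y where Y: "Y \<in> runsS F" "i \<in> Y" "even (Max Y - i)" "i \<in> X" unfolding P_def by auto
      hence "Y = X" using runsS_disj[OF Y(1) X] by auto
      thus "i \<in> {i\<in>X. even (Max X - i)}" using Y by auto
    qed
    show "{i\<in>X. even (Max X - i)} \<subseteq> P \<inter> X" unfolding P_def using X by auto
  qed
  have nosucc: "Suc i \<notin> P" if iP: "i \<in> P" for i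
  proof
    assume si: "Suc i \<in> P"
    obtain X where X: "X \<in> runsS F" "i \<in> X" "even (Max X - i)" using iP unfolding P_def by blast
    obtain a b where ab: "X = {a..b}" "a \<le> b" "b + 1 \<notin> F" using X(1) by (auto elim: runsS_E)
    have "Suc i \<in> F" using si PF by auto
    hence "i < b" using ab X by (metis Suc_eq_plus1 atLeastAtMost_iff le_neq_implies_less)
    hence "Suc i \<in> X" using ab X by auto
    hence "Suc i \<in> P \<inter> X" using si by auto
    hence "even (Max X - Suc i)" using PX[OF X(1)] by auto
    moreover have "Max X = b" using ab by simp
    ultimately show False using X(3) \<open>i < b\<close> by presburger
  qed
  define t where "t i = (if i \<in> P then Pos else if i \<le> Suc M then Neg else Zer)" for i
  have "finite {i. t i \<noteq> Zer}"
    by (rule finite_subset[of _ "{..Suc M}"]) (auto simp: t_def dest: PM[rule_format] split: if_splits)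
  hence tSS: "t \<in> SS" unfolding SS_def ssupp_def by simp
  have tpos: "\<forall>i. t i = Pos \<longrightarrow> i \<in> F" unfolding t_def using PF by auto
  define PA where "PA = (\<lambda>i. (i, Suc i)) ` P"
  define PB where "PB = (\<lambda>j. (j - 1, j)) ` (P - {0})"
  have PAsub: "PA \<subseteq> SCpairs t"
  proof
    fix p assume "p \<in> PA"
    then obtain i where i: "i \<in> P" "p = (i, Suc i)" unfolding PA_def by auto
    have "t i = Pos" using i unfolding t_def by simp
    moreover have "t (Suc i) = Neg" using nosucc[OF i(1)] PM i(1) unfolding t_def by auto
    ultimately show "p \<in> SCpairs t" unfolding SCpairs_def i(2) by auto
  qed
  have PBsub: "PB \<subseteq> SCpairs t"
  proof
    fix p assume "p \<in> PB"
    then obtain j where j: "j \<in> P" "0 < j" "p = (j - 1, j)" unfolding PB_def by auto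
    have "t j = Pos" using j unfolding t_def by simp
    moreover have "j - 1 \<notin> P" using nosucc[of "j - 1"] j by auto
    hence "t (j - 1) = Neg" using PM j(1) unfolding t_def by auto
    ultimately show "p \<in> SCpairs t" unfolding SCpairs_def j(3) using j(2) by auto
  qed
  have disj: "PA \<inter> PB = {}"
  proof -
    have "\<forall>p\<in>PA. t (fst p) = Pos" unfolding PA_def t_def by auto
    moreover have "\<forall>p\<in>PB. t (fst p) \<noteq> Pos"
    proof
      fix p assume "p \<in> PB"
      then obtain j where j: "j \<in> P" "0 < j" "p = (j - 1, j)" unfolding PB_def by auto
      have "j - 1 \<notin> P" using nosucc[of "j - 1"] j by auto
      thus "t (fst p) \<noteq> Pos" using j unfolding t_def by auto
    qed
    ultimately show ?thesis by fastforce
  qed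
  have finP: "finite P" using PF fin by (auto intro: finite_subset)
  have cPA: "card PA = card P" unfolding PA_def by (rule card_image) (auto intro: inj_onI)
  have cPB: "card PB = card (P - {0})" unfolding PB_def
    by (rule card_image) (auto intro!: inj_onI)
  have finSC: "finite (SCpairs t)"
  proof (rule finite_subset[of _ "{..Suc M} \<times> {..Suc M}"])
    show "SCpairs t \<subseteq> {..Suc M} \<times> {..Suc M}"
    proof
      fix p assume "p \<in> SCpairs t"
      then obtain i j where p: "p = (i, j)" "{t i, t j} = {Neg, Pos}" unfolding SCpairs_def by auto
      have "t i \<noteq> Zer" "t j \<noteq> Zer" using p(2) unfolding pair_cases by auto
      hence "i \<le> Suc M" "j \<le> Suc M" unfolding t_def using PM by (auto split: if_splits)
      thus "p \<in> {..Suc M} \<times> {..Suc M}" using p by auto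
    qed
  qed simp
  have "card P + card (P - {0}) = card (PA \<union> PB)"
    using card_Un_disjoint[of PA PB] disj finP cPA cPB unfolding PA_def PB_def by auto
  also have "\<dots> \<le> SC t" unfolding SC_pairs by (rule card_mono[OF finSC]) (use PAsub PBsub in auto)
  finally have low: "card P + card (P - {0}) \<le> SC t" .
  have "card P + card (P - {0}) = (\<Sum>X\<in>runsS F. card (P \<inter> X) + card ((P - {0}) \<inter> X))"
    using card_by_runs[OF fin PF] card_by_runs[OF fin, of "P - {0}"] PF by (auto simp: sum.distrib)
  also have "\<dots> = Wt F" unfolding Wt_def
  proof (rule sum.cong)
    fix X assume X: "X \<in> runsS F"
    then obtain a b where ab: "X = {a..b}" "a \<le> b" by (auto elim: runsS_E)
    have c1: "card (P \<inter> X) = (b - a) div 2 + 1" unfolding PX[OF X] using card_even_pos[OF ab(2)] ab by simp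
    show "card (P \<inter> X) + card ((P - {0}) \<inter> X) = wt X"
    proof (cases "a = 0")
      case True
      have "(P - {0}) \<inter> X = (P \<inter> X) - {0}" by auto
      moreover have "(0 \<in> P \<inter> X) = even b" unfolding PX[OF X] using ab True by auto
      ultimately have "card ((P - {0}) \<inter> X) = (b - a) div 2 + 1 - (if even b then 1 else 0)"
        using c1 finP by (auto simp: card_Diff_singleton)
      moreover have "wt X = b + 1" using ab True by (simp add: wt_ival)
      ultimately show ?thesis using c1 True arith_low0[of b] by simp
    next
      case False
      have "(P - {0}) \<inter> X = P \<inter> X" using ab False by auto
      moreover have "wt X = (if odd (b + 1 - a) then b + 2 - a else b + 1 - a)" using ab False by (simp add: wt_ival)
      ultimately show ?thesis using c1 False arith_low1[of a b] ab by simp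
    qed
  qed simp
  finally show ?thesis using low tSS tpos by auto
qed

lemma dd_formula:
  assumes s: "s \<in> SSplus"
  shows "dd s = Wt (ssupp s)"
proof -
  define F where "F = ssupp s"
  have fin: "finite F" using s unfolding F_def SSplus_def SS_def by auto
  have sv: "\<forall>i. s i \<in> {Zer, Pos}" using s unfolding SSplus_def by auto
  have adm: "(\<forall>i. t i \<in> {Neg, Zer, s i}) \<longleftrightarrow> (\<forall>i. t i = Pos \<longrightarrow> i \<in> F)" for t
  proof
    assume a: "\<forall>i. t i \<in> {Neg, Zer, s i}"
    show "\<forall>i. t i = Pos \<longrightarrow> i \<in> F"
    proof (intro allI impI)
      fix i assume "t i = Pos"
      hence "s i = Pos" using a by (metis empty_iff insert_iff sgnsym.distinct(3) sgnsym.distinct(5))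
      thus "i \<in> F" unfolding F_def ssupp_def by auto
    qed
  next
    assume a: "\<forall>i. t i = Pos \<longrightarrow> i \<in> F"
    show "\<forall>i. t i \<in> {Neg, Zer, s i}"
    proof
      fix i
      show "t i \<in> {Neg, Zer, s i}"
      proof (cases "t i")
        case Pos
        hence "i \<in> F" using a by auto
        hence "s i = Pos" using sv unfolding F_def ssupp_def by auto
        thus ?thesis using Pos by simp
      qed auto
    qed
  qed
  define D where "D = {SC t | t. t \<in> SS \<and> (\<forall>i. t i \<in> {Neg, Zer, s i})}"
  have Dle: "\<forall>x\<in>D. x \<le> Wt F" unfolding D_def using SC_upper[OF fin] adm by auto
  have finD: "finite D" by (rule finite_subset[of _ "{..Wt F}"]) (use Dle in auto)
  obtain t0 where t0: "t0 \<in> SS" "\<forall>i. t0 i = Pos \<longrightarrow> i \<in> F" "Wt F \<le> SC t0" using SC_lower[OF fin] by blast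
  have "SC t0 \<in> D" unfolding D_def using t0 adm by auto
  hence "SC t0 = Wt F" using Dle t0 by force
  hence "Max D = Wt F" using \<open>SC t0 \<in> D\<close> Dle finD by (metis Max_eqI)
  thus ?thesis unfolding dd_def D_def[symmetric] F_def .
qed

definition cnt :: "nat set \<Rightarrow> nat \<Rightarrow> nat" where
  "cnt S k = card {x\<in>S. k \<le> x}"

definition paired :: "nat set \<Rightarrow> bool" where
  "paired S \<longleftrightarrow> (\<forall>k\<in>S. 0 < k \<and> odd (cnt S k) \<longrightarrow> k - 1 \<in> S)"

lemma cnt_Suc_in: "finite S \<Longrightarrow> k \<in> S \<Longrightarrow> cnt S k = Suc (cnt S (Suc k))"
proof -
  assume fin: "finite S" and k: "k \<in> S"
  have "{x\<in>S. k \<le> x} = insert k {x\<in>S. Suc k \<le> x}" using k by auto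
  moreover have "k \<notin> {x\<in>S. Suc k \<le> x}" by auto
  moreover have "finite {x\<in>S. Suc k \<le> x}" using fin by auto
  ultimately show ?thesis unfolding cnt_def by simp
qed

lemma cnt_Suc_out: "k \<notin> S \<Longrightarrow> cnt S k = cnt S (Suc k)"
proof -
  assume k: "k \<notin> S"
  have "{x\<in>S. k \<le> x} = {x\<in>S. Suc k \<le> x}" using k by (auto simp: Suc_le_eq le_less)
  thus ?thesis unfolding cnt_def by simp
qed

lemma run_cnt:
  assumes fin: "finite S" and ab: "a \<le> b" and sub: "{a..b} \<subseteq> S"
  shows "cnt S a = cnt S b + (b - a)"
proof -
  have eq: "{x\<in>S. a \<le> x} = {a..<b} \<union> {x\<in>S. b \<le> x}" using sub ab by auto
  have "card ({a..<b} \<union> {x\<in>S. b \<le> x}) = card {a..<b} + card {x\<in>S. b \<le> x}"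
    by (rule card_Un_disjoint) (use fin in auto)
  thus ?thesis unfolding cnt_def eq by simp
qed

lemma tops_odd:
  assumes fin: "finite S" and pr: "paired S" and b: "b \<in> S" and sb: "Suc b \<notin> S"
  shows "odd (cnt S b)"
proof (cases "{x\<in>S. b < x} = {}")
  case True
  hence "{x\<in>S. b \<le> x} = {b}" using b by (auto simp: le_less)
  thus ?thesis unfolding cnt_def by simp
next
  case False
  define k where "k = Min {x\<in>S. b < x}"
  have fk: "finite {x\<in>S. b < x}" using fin by auto
  have k: "k \<in> S" "b < k" using Min_in[OF fk False] unfolding k_def by auto
  have kmin: "\<And>y. y \<in> S \<Longrightarrow> b < y \<Longrightarrow> k \<le> y" unfolding k_def using Min_le[OF fk] by auto
  have "k \<noteq> Suc b" using k sb by auto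
  hence kb: "Suc b < k" using k by linarith
  have "k - 1 \<notin> S"
  proof
    assume "k - 1 \<in> S"
    hence "k \<le> k - 1" using kmin kb by auto
    thus False using kb by simp
  qed
  hence "even (cnt S k)" using pr k kb unfolding paired_def by auto
  moreover have "{x\<in>S. b \<le> x} = insert b {x\<in>S. k \<le> x}"
    using b k kmin by (auto simp: le_less)
  moreover have "b \<notin> {x\<in>S. k \<le> x}" using k by auto
  ultimately show ?thesis unfolding cnt_def using fin by simp
qed

lemma paired_run_even:
  assumes fin: "finite S" and pr: "paired S" and X: "X \<in> runsS S" and nz: "0 \<notin> X"
  shows "even (card X)"
proof -
  obtain a b where ab: "X = {a..b}" "a \<le> b" "{a..b} \<subseteq> S" "0 < a \<longrightarrow> a - 1 \<notin> S" "b + 1 \<notin> S"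
    using X by (rule runsS_E)
  have a0: "0 < a" using nz ab by (cases a) auto
  have "a \<in> S" using ab by auto
  hence ea: "even (cnt S a)" using pr ab a0 unfolding paired_def by auto
  have ob: "odd (cnt S b)" using tops_odd[OF fin pr] ab by auto
  have "cnt S a = cnt S b + (b - a)" using run_cnt[OF fin ab(2,3)] .
  hence "odd (b - a)" using ea ob by auto
  thus ?thesis using ab by auto
qed

lemma paired_wt: "finite S \<Longrightarrow> paired S \<Longrightarrow> X \<in> runsS S \<Longrightarrow> wt X = card X"
  unfolding wt_def using paired_run_even by auto

lemma paired_ceil: "finite S \<Longrightarrow> paired S \<Longrightarrow> X \<in> runsS S \<Longrightarrow> ceilI X = X"
  unfolding ceilI_def using paired_run_even by auto

lemma paired_floor: "finite S \<Longrightarrow> paired S \<Longrightarrow> X \<in> runsS S \<Longrightarrow> floorI X = X"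
  unfolding floorI_def using paired_run_even by auto

lemma paired_Cset: "finite S \<Longrightarrow> paired S \<Longrightarrow> Cset S = S"
  unfolding Cset_def using paired_ceil runsS_Union by (metis (no_types, lifting) SUP_cong image_ident)

lemma paired_Wt: assumes "finite S" "paired S" shows "Wt S = card S"
proof -
  have "card S = (\<Sum>X\<in>runsS S. card (S \<inter> X))" using card_by_runs[OF assms(1)] by simp
  also have "\<dots> = (\<Sum>X\<in>runsS S. wt X)"
    by (rule sum.cong) (use paired_wt[OF assms] runsS_sub in \<open>auto simp: Int_absorb1\<close>)
  finally show ?thesis unfolding Wt_def by simp
qed

lemma ceil_disj: "X \<in> runsS F \<Longrightarrow> Y \<in> runsS F \<Longrightarrow> X \<noteq> Y \<Longrightarrow> ceilI X \<inter> ceilI Y = {}"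
proof -
  assume XY: "X \<in> runsS F" "Y \<in> runsS F" "X \<noteq> Y"
  obtain a b where ab: "X = {a..b}" "a \<le> b" using XY(1) by (auto elim: runsS_E)
  obtain c d where cd: "Y = {c..d}" "c \<le> d" using XY(2) by (auto elim: runsS_E)
  have "b + 1 < c \<or> d + 1 < a" using runs_gap[OF XY] ab cd by simp
  hence "{a..b+1} \<inter> {c..d+1} = {}" by auto
  thus "ceilI X \<inter> ceilI Y = {}" using ceil_range[OF ab(2)] ceil_range[OF cd(2)] ab cd by blast
qed

lemma G_gen:
  assumes fin: "finite F"
    and cond: "\<forall>X\<in>runsS F. (k \<le> Min X \<and> 0 < Min X) \<or> (\<forall>y\<in>ceilI X. y < k)"
  shows "even (cnt (Cset F) k)"
proof -
  define R where "R = {X\<in>runsS F. k \<le> Min X \<and> 0 < Min X}"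
  have eq: "{x\<in>Cset F. k \<le> x} = \<Union>(ceilI ` R)"
  proof
    show "{x\<in>Cset F. k \<le> x} \<subseteq> \<Union>(ceilI ` R)"
    proof
      fix x assume x: "x \<in> {x\<in>Cset F. k \<le> x}"
      then obtain X where X: "X \<in> runsS F" "x \<in> ceilI X" unfolding Cset_def by auto
      have "X \<in> R" using cond X x unfolding R_def by fastforce
      thus "x \<in> \<Union>(ceilI ` R)" using X by auto
    qed
    show "\<Union>(ceilI ` R) \<subseteq> {x\<in>Cset F. k \<le> x}"
    proof
      fix x assume "x \<in> \<Union>(ceilI ` R)"
      then obtain X where X: "X \<in> R" "x \<in> ceilI X" by auto
      obtain a b where ab: "X = {a..b}" "a \<le> b" using X(1) unfolding R_def by (auto elim: runsS_E)
      have "a \<le> x" using X(2) ceil_range[OF ab(2)] ab by auto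
      moreover have "k \<le> a" using X(1) ab unfolding R_def by auto
      ultimately show "x \<in> {x\<in>Cset F. k \<le> x}" using X unfolding Cset_def R_def by auto
    qed
  qed
  have finR: "finite R" unfolding R_def using runsS_finite[OF fin] by auto
  have "card (\<Union>(ceilI ` R)) = (\<Sum>X\<in>R. card (ceilI X))"
  proof (rule card_UN_disjoint[OF finR])
    show "\<forall>X\<in>R. finite (ceilI X)"
    proof
      fix X assume "X \<in> R"
      then obtain a b where ab: "X = {a..b}" "a \<le> b" unfolding R_def by (auto elim: runsS_E)
      show "finite (ceilI X)" unfolding ab(1) by (rule finite_subset[OF ceil_range[OF ab(2)]]) simp
    qed
    show "\<forall>X\<in>R. \<forall>Y\<in>R. X \<noteq> Y \<longrightarrow> ceilI X \<inter> ceilI Y = {}"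
      using ceil_disj unfolding R_def by auto
  qed
  moreover have "even (\<Sum>X\<in>R. card (ceilI X))"
  proof (rule dvd_sum)
    fix X assume "X \<in> R"
    then obtain a b where ab: "X = {a..b}" "a \<le> b" "0 < a" unfolding R_def by (auto elim: runsS_E)
    have "card (ceilI X) = wt X" using card_ceil ab by simp
    thus "even (card (ceilI X))" using ab by (simp add: wt_ival)
  qed
  ultimately show ?thesis unfolding cnt_def eq by simp
qed

lemma G_notin:
  assumes fin: "finite F" and k: "k \<notin> Cset F"
  shows "even (cnt (Cset F) k)"
proof (rule G_gen[OF fin], rule ballI)
  fix X assume X: "X \<in> runsS F"
  obtain a b where ab: "X = {a..b}" "a \<le> b" using X by (auto elim: runsS_E)
  obtain b' where b': "ceilI X = {a..b'}" "b \<le> b'" using ceil_ival[OF ab(2)] ab by auto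
  have sub: "ceilI X \<subseteq> Cset F" unfolding Cset_def using X by auto
  show "(k \<le> Min X \<and> 0 < Min X) \<or> (\<forall>y\<in>ceilI X. y < k)"
  proof (cases "a < k")
    case True
    have "\<forall>y\<in>ceilI X. y < k"
    proof (rule ccontr)
      assume "\<not> (\<forall>y\<in>ceilI X. y < k)"
      then obtain y where "y \<in> ceilI X" "k \<le> y" by auto
      hence "k \<in> ceilI X" using b' True by auto
      thus False using sub k by auto
    qed
    thus ?thesis by simp
  next
    case False
    have "a \<in> {a..b'}" using b' ab by auto
    hence "a \<in> Cset F" using sub b' by auto
    hence "a \<noteq> k" using k by auto
    hence "k < a" using False by simp
    thus ?thesis using ab by simp
  qed
qed

lemma added_form:
  assumes fin: "finite F" and k: "k \<in> Cset F" "k \<notin> F"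
  shows "\<exists>a b. {a..b} \<in> runsS F \<and> a \<le> b \<and> 0 < a \<and> odd (b + 1 - a) \<and> k = b + 1"
proof -
  obtain X where X: "X \<in> runsS F" "k \<in> ceilI X" using k unfolding Cset_def by auto
  obtain a b where ab: "X = {a..b}" "a \<le> b" using X by (auto elim: runsS_E)
  have "k \<notin> X" using runsS_sub[OF X(1)] k by auto
  hence "0 < a \<and> odd (b + 1 - a) \<and> k = b + 1" using X(2) unfolding ab ceil_ival[OF ab(2)]
    by (auto split: if_splits)
  thus ?thesis using X ab by blast
qed

lemma G_added:
  assumes fin: "finite F" and k: "k \<in> Cset F" "k \<notin> F"
  shows "odd (cnt (Cset F) k)"
proof -
  obtain a b where ab: "{a..b} \<in> runsS F" "a \<le> b" "0 < a" "odd (b + 1 - a)" "k = b + 1"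
    using added_form[OF fin k] by blast
  have "even (cnt (Cset F) (Suc k))"
  proof (rule G_gen[OF fin], rule ballI)
    fix Y assume Y: "Y \<in> runsS F"
    obtain c d where cd: "Y = {c..d}" "c \<le> d" using Y by (auto elim: runsS_E)
    show "(Suc k \<le> Min Y \<and> 0 < Min Y) \<or> (\<forall>y\<in>ceilI Y. y < Suc k)"
    proof (cases "Y = {a..b}")
      case True
      thus ?thesis using ceil_range[OF ab(2)] ab(5) by auto
    next
      case False
      have "Max {a..b} + 1 < Min Y \<or> Max Y + 1 < Min {a..b}" using runs_gap[OF ab(1) Y] False by auto
      hence "b + 1 < c \<or> d + 1 < a" using ab cd by simp
      thus ?thesis
      proof
        assume "b + 1 < c" thus ?thesis using ab cd by auto
      next
        assume "d + 1 < a" thus ?thesis using ceil_range[OF cd(2)] cd ab by fastforce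
      qed
    qed
  qed
  moreover have "cnt (Cset F) k = Suc (cnt (Cset F) (Suc k))" using cnt_Suc_in[OF finite_Cset[OF fin] k(1)] .
  ultimately show ?thesis by simp
qed

lemma paired_Cset_gen: assumes fin: "finite F" shows "paired (Cset F)"
  unfolding paired_def
proof (intro ballI impI)
  fix k assume k: "k \<in> Cset F" "0 < k \<and> odd (cnt (Cset F) k)"
  show "k - 1 \<in> Cset F"
  proof (rule ccontr)
    assume n: "k - 1 \<notin> Cset F"
    have "cnt (Cset F) (k - 1) = cnt (Cset F) (Suc (k - 1))" using cnt_Suc_out[OF n] .
    hence "cnt (Cset F) (k - 1) = cnt (Cset F) k" using k by simp
    thus False using G_notin[OF fin n] k by simp
  qed
qed

lemma EvIn_C: "finite F \<Longrightarrow> k \<in> Cset F \<Longrightarrow> even (cnt (Cset F) k) \<Longrightarrow> k \<in> F"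
  using G_added by blast

lemma z_props:
  assumes fin: "finite F"
  defines "z \<equiv> LEAST i. i \<notin> Cset F"
  shows "z \<notin> Cset F" "\<forall>i<z. i \<in> Cset F" "\<forall>i<z. i \<in> F" "even (cnt (Cset F) z)"
proof -
  have ex: "\<exists>i. i \<notin> Cset F" using finite_Cset[OF fin] infinite_UNIV_nat
    by (metis UNIV_I finite_subset subsetI)
  show zn: "z \<notin> Cset F" unfolding z_def using LeastI_ex[OF ex] .
  show zl: "\<forall>i<z. i \<in> Cset F" unfolding z_def using not_less_Least by blast
  show "\<forall>i<z. i \<in> F"
  proof (intro allI impI)
    fix i show "i < z \<Longrightarrow> i \<in> F"
    proof (induction i rule: less_induct)
      case (less i)
      show ?case
      proof (rule ccontr)
        assume n: "i \<notin> F"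
        have "i \<in> Cset F" using zl less by auto
        then obtain a b where ab: "{a..b} \<in> runsS F" "a \<le> b" "0 < a" "odd (b + 1 - a)" "i = b + 1"
          using added_form[OF fin _ n] by blast
        have "a - 1 < i" using ab by auto
        hence "a - 1 \<in> F" using less by auto
        moreover have "a - 1 \<notin> F" using ab(1,3) by (auto elim!: runsS_E)
        ultimately show False by simp
      qed
    qed
  qed
  show "even (cnt (Cset F) z)" using G_notin[OF fin zn] .
qed

lemma cnt_insert: "finite C \<Longrightarrow> z \<notin> C \<Longrightarrow> cnt (insert z C) k = (if k \<le> z then Suc (cnt C k) else cnt C k)"
proof -
  assume fin: "finite C" and z: "z \<notin> C"
  show ?thesis
  proof (cases "k \<le> z")
    case True
    have "{x\<in>insert z C. k \<le> x} = insert z {x\<in>C. k \<le> x}" using True by auto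
    thus ?thesis using True z fin unfolding cnt_def by simp
  next
    case False
    have "{x\<in>insert z C. k \<le> x} = {x\<in>C. k \<le> x}" using False by auto
    thus ?thesis using False unfolding cnt_def by simp
  qed
qed

lemma splus_props:
  assumes fin: "finite F"
  defines "z \<equiv> LEAST i. i \<notin> Cset F"
  shows "paired (insert z (Cset F))" "\<forall>k\<in>insert z (Cset F). even (cnt (insert z (Cset F)) k) \<longrightarrow> k \<in> F"
proof -
  note zp = z_props[OF fin, folded z_def]
  have finC: "finite (Cset F)" using finite_Cset[OF fin] .
  note ci = cnt_insert[OF finC zp(1)]
  show "paired (insert z (Cset F))" unfolding paired_def
  proof (intro ballI impI)
    fix k assume k: "k \<in> insert z (Cset F)" "0 < k \<and> odd (cnt (insert z (Cset F)) k)"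
    show "k - 1 \<in> insert z (Cset F)"
    proof (cases "k \<le> z")
      case True
      hence "k - 1 < z" using k by auto
      thus ?thesis using zp(2) by auto
    next
      case False
      hence "k \<in> Cset F" "odd (cnt (Cset F) k)" using k ci by auto
      hence "k - 1 \<in> Cset F" using paired_Cset_gen[OF fin] k unfolding paired_def by auto
      thus ?thesis by simp
    qed
  qed
  show "\<forall>k\<in>insert z (Cset F). even (cnt (insert z (Cset F)) k) \<longrightarrow> k \<in> F"
  proof (intro ballI impI)
    fix k assume k: "k \<in> insert z (Cset F)" "even (cnt (insert z (Cset F)) k)"
    show "k \<in> F"
    proof (cases "k < z")
      case True thus ?thesis using zp(3) by auto
    next
      case False
      show ?thesis
      proof (cases "k = z")
        case True
        hence "odd (cnt (insert z (Cset F)) k)" using ci zp(4) by simp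
        thus ?thesis using k by simp
      next
        case False
        hence "z < k" using \<open>\<not> k < z\<close> by simp
        hence "k \<in> Cset F" "even (cnt (Cset F) k)" using k ci by auto
        thus ?thesis using EvIn_C[OF fin] by blast
      qed
    qed
  qed
qed

lemma top_odd_R:
  assumes fin: "finite S" and pr: "paired S" and R: "\<forall>k\<in>R. even (cnt S k)"
    and b: "b \<in> S - R" and sb: "Suc b \<notin> S - R"
  shows "odd (cnt S b)"
proof (cases "Suc b \<in> S")
  case False thus ?thesis using tops_odd[OF fin pr] b by auto
next
  case True
  hence "Suc b \<in> R" using sb by auto
  hence "even (cnt S (Suc b))" using R by auto
  thus ?thesis using cnt_Suc_in[OF fin, of b] b by auto
qed

lemma removal_floor:
  assumes fin: "finite S" and pr: "paired S" and RS: "R \<subseteq> S" and R: "\<forall>k\<in>R. even (cnt S k)"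
  shows "Fset (S - R) = S"
proof
  have finSR: "finite (S - R)" using fin by auto
  show "Fset (S - R) \<subseteq> S"
  proof
    fix x assume "x \<in> Fset (S - R)"
    then obtain Y where Y: "Y \<in> runsS (S - R)" "x \<in> floorI Y" unfolding Fset_def by auto
    obtain a b where ab: "Y = {a..b}" "a \<le> b" "{a..b} \<subseteq> S - R" "0 < a \<longrightarrow> a - 1 \<notin> S - R" "b + 1 \<notin> S - R"
      using Y(1) by (rule runsS_E)
    show "x \<in> S"
    proof (cases "a \<le> x")
      case True
      hence "x \<in> {a..b}" using Y(2) floor_range[OF ab(2)] ab(1) by auto
      thus ?thesis using ab by auto
    next
      case False
      hence xa: "x = a - 1" "0 < a" "odd (b + 1 - a)" using Y(2) unfolding ab(1) floor_ival[OF ab(2)]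
        by (auto split: if_splits)
      show ?thesis
      proof (rule ccontr)
        assume n: "x \<notin> S"
        have "a \<in> S" using ab by auto
        hence ea: "even (cnt S a)" using pr xa n unfolding paired_def by auto
        have "b \<in> S - R" using ab by auto
        hence ob: "odd (cnt S b)" using top_odd_R[OF fin pr R] ab by auto
        have "{a..b} \<subseteq> S" using ab by auto
        hence "cnt S a = cnt S b + (b - a)" using run_cnt[OF fin ab(2)] by auto
        hence "odd (b - a)" using ea ob by auto
        thus False using xa ab by auto
      qed
    qed
  qed
  show "S \<subseteq> Fset (S - R)"
  proof
    fix x assume x: "x \<in> S"
    show "x \<in> Fset (S - R)"
    proof (cases "x \<in> R")
      case False
      thus ?thesis using F_sub_Fset[OF finSR] x by auto
    next
      case True
      have ex: "even (cnt S x)" using R True by auto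
      have sx: "Suc x \<in> S" using tops_odd[OF fin pr x] ex by auto
      have "odd (cnt S (Suc x))" using cnt_Suc_in[OF fin x] ex by auto
      hence "Suc x \<notin> R" using R by auto
      hence sxR: "Suc x \<in> S - R" using sx by auto
      then obtain Y where Y: "Y \<in> runsS (S - R)" "Suc x \<in> Y" using runsS_cover[OF finSR] by blast
      obtain a b where ab: "Y = {a..b}" "a \<le> b" "{a..b} \<subseteq> S - R" "0 < a \<longrightarrow> a - 1 \<notin> S - R" "b + 1 \<notin> S - R"
        using Y(1) by (rule runsS_E)
      have "a = Suc x"
      proof (rule ccontr)
        assume "a \<noteq> Suc x"
        hence "a \<le> x" using Y ab by auto
        hence "x \<in> S - R" using ab Y by auto
        thus False using True by auto
      qed
      have "b \<in> S - R" using ab by auto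
      hence ob: "odd (cnt S b)" using top_odd_R[OF fin pr R] ab by auto
      have "{a..b} \<subseteq> S" using ab by auto
      hence "cnt S a = cnt S b + (b - a)" using run_cnt[OF fin ab(2)] by auto
      hence "even (b - a)" using ob \<open>odd (cnt S (Suc x))\<close> \<open>a = Suc x\<close> by auto
      hence "odd (b + 1 - a)" using ab by auto
      hence "x \<in> floorI Y" unfolding ab(1) floor_ival[OF ab(2)] using \<open>a = Suc x\<close> ab by auto
      thus ?thesis unfolding Fset_def using Y by auto
    qed
  qed
qed

definition dec :: "nat set \<Rightarrow> nat list" where
  "dec S = rev (sorted_list_of_set S)"

lemma dec_supp_eq: "dec_supp s = dec (ssupp s)"
  unfolding dec_supp_def dec_def ..

lemma dec_length: "finite S \<Longrightarrow> length (dec S) = card S"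
  unfolding dec_def by simp

lemma dec_nth:
  assumes fin: "finite S" and i: "i < card S"
  shows "dec S ! i \<in> S \<and> cnt S (dec S ! i) = Suc i"
proof -
  define L where "L = sorted_list_of_set S"
  define n where "n = card S"
  have sl: "sorted_wrt (<) L" unfolding L_def by simp
  have setL: "set L = S" unfolding L_def using fin by simp
  have lenL: "length L = n" unfolding L_def n_def by simp
  define p where "p = n - Suc i"
  have p: "p < n" unfolding p_def using i n_def by simp
  have di: "dec S ! i = L ! p" unfolding dec_def L_def[symmetric] p_def using i lenL n_def
    by (simp add: rev_nth)
  have mono: "L ! q < L ! r" if "q < r" "r < n" for q r using sorted_wrt_nth_less[OF sl that(1)] that lenL by simp
  have eq: "{x\<in>S. L ! p \<le> x} = (\<lambda>q. L ! q) ` {p..<n}"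
  proof
    show "{x\<in>S. L ! p \<le> x} \<subseteq> (\<lambda>q. L ! q) ` {p..<n}"
    proof
      fix x assume x: "x \<in> {x\<in>S. L ! p \<le> x}"
      then obtain q where q: "q < n" "x = L ! q" using setL lenL by (auto simp: in_set_conv_nth)
      have "p \<le> q"
      proof (rule ccontr)
        assume "\<not> p \<le> q" hence "L ! q < L ! p" using mono p by auto
        thus False using x q by auto
      qed
      thus "x \<in> (\<lambda>q. L ! q) ` {p..<n}" using q by auto
    qed
    show "(\<lambda>q. L ! q) ` {p..<n} \<subseteq> {x\<in>S. L ! p \<le> x}"
    proof
      fix x assume "x \<in> (\<lambda>q. L ! q) ` {p..<n}"
      then obtain q where q: "p \<le> q" "q < n" "x = L ! q" by auto
      have "L ! p \<le> L ! q" using mono[of p q] q by (cases "p = q") auto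
      moreover have "L ! q \<in> S" using setL lenL q by auto
      ultimately show "x \<in> {x\<in>S. L ! p \<le> x}" using q by auto
    qed
  qed
  have inj: "inj_on (\<lambda>q. L ! q) {p..<n}"
  proof (rule inj_onI)
    fix q r assume "q \<in> {p..<n}" "r \<in> {p..<n}" "L ! q = L ! r"
    thus "q = r" using mono[of q r] mono[of r q] by (metis atLeastLessThan_iff less_irrefl linorder_neqE_nat)
  qed
  have "cnt S (L ! p) = n - p" unfolding cnt_def eq card_image[OF inj] by simp
  hence "cnt S (L ! p) = Suc i" unfolding p_def using i n_def by simp
  moreover have "L ! p \<in> S" using setL lenL p by auto
  ultimately show ?thesis using di by simp
qed

lemma cnt_mono_set: "finite B \<Longrightarrow> A \<subseteq> B \<Longrightarrow> cnt A k \<le> cnt B k"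
  unfolding cnt_def by (rule card_mono) auto

lemma dec_strict:
  assumes fin: "finite S" and ij: "i < j" "j < card S"
  shows "dec S ! j < dec S ! i"
proof (rule ccontr)
  assume "\<not> dec S ! j < dec S ! i"
  hence le: "dec S ! i \<le> dec S ! j" by simp
  have "cnt S (dec S ! j) \<le> cnt S (dec S ! i)" unfolding cnt_def
    by (rule card_mono) (use fin le in auto)
  thus False using dec_nth[OF fin] ij by (metis Suc_le_mono leD less_trans)
qed

lemma dec_set: "finite S \<Longrightarrow> set (dec S) = S"
  unfolding dec_def by simp

lemma dec_sub_le:
  assumes finB: "finite B" and AB: "A \<subseteq> B" and i: "i < card A"
  shows "dec A ! i \<le> dec B ! i"
proof (rule ccontr)
  have finA: "finite A" using finB AB finite_subset by auto
  have iB: "i < card B" using i card_mono[OF finB AB] by linarith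
  define x where "x = dec A ! i"
  define y where "y = dec B ! i"
  have x: "x \<in> A" "cnt A x = Suc i" using dec_nth[OF finA i] unfolding x_def by auto
  have y: "y \<in> B" "cnt B y = Suc i" using dec_nth[OF finB iB] unfolding y_def by auto
  assume "\<not> x \<le> y"
  hence yx: "y < x" by simp
  have "{z\<in>B. x \<le> z} \<subseteq> {z\<in>B. y \<le> z} - {y}" using yx by auto
  hence "cnt B x \<le> card ({z\<in>B. y \<le> z} - {y})" unfolding cnt_def by (rule card_mono[rotated]) (use finB in auto)
  also have "\<dots> = cnt B y - 1" unfolding cnt_def using y finB by (simp add: card_Diff_singleton)
  finally have "cnt B x \<le> i" using y by simp
  moreover have "cnt A x \<le> cnt B x" by (rule cnt_mono_set[OF finB AB])
  ultimately show False using x by simp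
qed




lemma finite_coeff_supp: "finite {n. coeff (p::real poly) n \<noteq> 0}"
  by (rule finite_subset[of _ "{..degree p}"]) (auto intro: le_degree)

lemma of_supp_SSplus: "finite A \<Longrightarrow> of_supp A \<in> SSplus"
proof -
  assume "finite A"
  hence "finite (ssupp (of_supp A))" by simp
  thus ?thesis unfolding SSplus_def SS_def by (auto simp: of_supp_def)
qed

lemma Sign_eq_of_supp:
  assumes "\<forall>n\<in>A. coeff p n > 0" "\<forall>n. n \<notin> A \<longrightarrow> coeff p n = 0"
  shows "Sign p = of_supp A"
proof
  fix i show "Sign p i = of_supp A i"
    unfolding Sign_def of_supp_def using assms by (cases "i \<in> A") auto
qed

lemma Sign_nonneg_eq: "nonneg_poly p \<Longrightarrow> Sign p = of_supp {n. coeff p n \<noteq> 0}"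
  unfolding nonneg_poly_def by (rule Sign_eq_of_supp) (auto simp: order_le_less)

lemma paired_Fset: "finite S \<Longrightarrow> paired S \<Longrightarrow> Fset S = S"
  unfolding Fset_def using paired_floor runsS_Union by (metis (no_types, lifting) SUP_cong image_ident)

lemma dd_paired: "finite S \<Longrightarrow> paired S \<Longrightarrow> dd (of_supp S) = card S"
  using dd_formula[OF of_supp_SSplus] paired_Wt by simp

lemma circ_paired: "finite S \<Longrightarrow> paired S \<Longrightarrow> of_supp S \<in> SSplus_circ"
  unfolding SSplus_circ_def using dd_paired of_supp_SSplus by simp

lemma preceq0_sub:
  assumes "finite B" "A \<subseteq> B" "paired A" "paired B"
  shows "preceq0 (of_supp A) (of_supp B)"
proof -
  have fA: "finite A" using assms finite_subset by auto
  show ?thesis unfolding preceq0_def dec_supp_eq ssupp_of_supp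
    using circ_paired[OF fA assms(3)] circ_paired[OF assms(1,4)] dec_length[OF fA] dec_length[OF assms(1)]
      card_mono[OF assms(1,2)] dec_sub_le[OF assms(1,2)] by auto
qed

lemma supp_rep:
  fixes p :: "real poly"
  assumes fin: "finite J" and inj: "inj_on d J" and supp: "\<forall>n. coeff p n \<noteq> 0 \<longrightarrow> n \<in> d ` J"
  shows "p = (\<Sum>j\<in>J. monom (coeff p (d j)) (d j))"
proof (rule poly_eqI)
  fix n show "coeff p n = coeff (\<Sum>j\<in>J. monom (coeff p (d j)) (d j)) n"
  proof (cases "n \<in> d ` J")
    case True
    then obtain j where "j \<in> J" "n = d j" by auto
    thus ?thesis using coeff_sum_monom_in[OF fin inj] by simp
  next
    case False
    thus ?thesis using coeff_sum_monom_out[OF False] supp by auto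
  qed
qed

lemma count_all:
  assumes "n \<le> (\<Sum>k<n. if P k then 1 else (0::nat))"
  shows "\<forall>k<n. P k"
proof -
  have "(\<Sum>k<n. if P k then 1 else (0::nat)) = card {k\<in>{..<n}. P k}"
    by (simp add: sum.If_cases Int_def conj_commute)
  hence c: "n \<le> card {k\<in>{..<n}. P k}" using assms by simp
  have "{k\<in>{..<n}. P k} = {..<n}"
    by (rule card_subset_eq) (use c card_mono[of "{..<n}" "{k\<in>{..<n}. P k}"] in auto)
  thus ?thesis by auto
qed




lemma structure_s:
  fixes f :: "real poly" and m :: nat
  assumes hf: "nonneg_poly f" and hd: "ddpoly f \<in> {m, m + 1}"
  defines "s \<equiv> (if ddpoly f = m then splus (sceil (Sign f)) else sceil (Sign f))"
  shows "\<exists>S. s = of_supp S \<and> finite S \<and> card S = m + 1 \<and> paired S \<and> ssupp (Sign f) \<subseteq> S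
      \<and> (\<forall>k\<in>S. even (cnt S k) \<longrightarrow> k \<in> ssupp (Sign f)) \<and> spreceq (Sign f) s"
proof -
  define F where "F = ssupp (Sign f)"
  have SF: "Sign f = of_supp F" unfolding F_def using Sign_nonneg_eq[OF hf] by simp
  have finF: "finite F" unfolding F_def using Sign_nonneg_eq[OF hf] finite_coeff_supp by simp
  define C where "C = Cset F"
  have finC: "finite C" unfolding C_def using finite_Cset[OF finF] .
  have prC: "paired C" unfolding C_def using paired_Cset_gen[OF finF] .
  have FC: "F \<subseteq> C" unfolding C_def using F_sub_Cset[OF finF] .
  have sc: "sceil (Sign f) = of_supp C" unfolding C_def sceil_eq SF by simp
  have SFplus: "Sign f \<in> SSplus" using SF of_supp_SSplus[OF finF] by simp
  have ddC: "ddpoly f = card C" unfolding ddpoly_def dd_formula[OF SFplus] C_def card_Cset[OF finF]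
    F_def[symmetric] ..
  have prec: "spreceq (Sign f) (of_supp S)" if S: "finite S" "paired S" "C \<subseteq> S" for S
  proof -
    have "preceq0 (sceil (Sign f)) (sfloor (of_supp S))"
      unfolding sc sfloor_eq ssupp_of_supp paired_Fset[OF S(1,2)]
      by (rule preceq0_sub[OF S(1) S(3) prC S(2)])
    thus ?thesis unfolding spreceq_def using SFplus of_supp_SSplus[OF S(1)] by auto
  qed
  show ?thesis
  proof (cases "ddpoly f = m")
    case True
    define z where "z = (LEAST i. i \<notin> C)"
    have zeq: "(LEAST i. of_supp C i = Zer) = z" unfolding z_def of_supp_def by simp
    have s: "s = of_supp (insert z C)" unfolding s_def using True
      by (simp add: sc splus_def zeq)
    note zp = z_props[OF finF, folded C_def, folded z_def]
    note sp = splus_props[OF finF, folded C_def, folded z_def]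
    have fin: "finite (insert z C)" using finC by simp
    have card: "card (insert z C) = m + 1" using zp(1) finC ddC True by (simp add: z_def)
    show ?thesis using s fin card sp FC prec[OF fin sp(1)] F_def by (intro exI[of _ "insert z C"]) auto
  next
    case False
    hence "ddpoly f = m + 1" using hd by simp
    hence card: "card C = m + 1" using ddC by simp
    have s: "s = of_supp C" unfolding s_def using False sc by simp
    have ev: "\<forall>k\<in>C. even (cnt C k) \<longrightarrow> k \<in> F" unfolding C_def using EvIn_C[OF finF] by blast
    show ?thesis using s finC card prC FC ev prec[OF finC prC] F_def by (intro exI[of _ C]) auto
  qed
qed

locale setting =
  fixes m :: nat and a :: "nat \<Rightarrow> real" and d :: "nat \<Rightarrow> nat"
  assumes hm: "m \<ge> 1"
    and ha0: "0 < a 1"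
    and hamono: "\<And>i j. 1 \<le> i \<Longrightarrow> i < j \<Longrightarrow> j \<le> m \<Longrightarrow> a i < a j"
    and dstrict: "\<forall>j k. 1 \<le> j \<and> j < k \<and> k \<le> m + 1 \<longrightarrow> d j > d k"
begin

lemma dlt: "1 \<le> j \<Longrightarrow> j < k \<Longrightarrow> k \<le> m + 1 \<Longrightarrow> d k < d j"
  using dstrict by blast

lemma a_pos: "i \<in> {1..m} \<Longrightarrow> 0 < a i"
  using ha0 hamono[of 1 i] by (cases "i = 1") auto

lemma a_le: "i \<in> {1..m} \<Longrightarrow> a i \<le> a m"
  using hamono[of i m] by (cases "i = m") auto

lemma a_inj: "inj_on a {1..m}"
proof (rule inj_onI)
  fix i j assume ij: "i \<in> {1..m}" "j \<in> {1..m}" "a i = a j"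
  show "i = j"
  proof (rule ccontr)
    assume "i \<noteq> j"
    then consider "i < j" | "j < i" by linarith
    thus False using hamono[of i j] hamono[of j i] ij by cases auto
  qed
qed

lemma cardA: "card (a ` {1..m}) = m"
  using card_image[OF a_inj] by simp

lemma d_inj: "inj_on d {1..m+1}"
proof (rule inj_onI)
  fix i j assume ij: "i \<in> {1..m+1}" "j \<in> {1..m+1}" "d i = d j"
  show "i = j"
  proof (rule ccontr)
    assume "i \<noteq> j"
    then consider "i < j" | "j < i" by linarith
    thus False using dlt[of i j] dlt[of j i] ij by cases auto
  qed
qed

lemma d_le1: "j \<in> {1..m+1} \<Longrightarrow> d j \<le> d 1"
  using dlt[of 1 j] by (cases "j = 1") auto

lemma coeffH_in: "j \<in> {1..m+1} \<Longrightarrow> coeff (\<Sum>j\<in>{1..m+1}. monom (c j :: real) (d j)) (d j) = c j"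
  by (rule coeff_sum_monom_in) (use d_inj in auto)

lemma coeffH_out: "n \<notin> d ` {1..m+1} \<Longrightarrow> coeff (\<Sum>j\<in>{1..m+1}. monom (c j :: real) (d j)) n = 0"
  by (rule coeff_sum_monom_out)

lemma card_minus: "j0 \<in> {1..m+1} \<Longrightarrow> card (d ` ({1..m+1} - {j0})) = m"
proof -
  assume j0: "j0 \<in> {1..m+1}"
  have "card (d ` ({1..m+1} - {j0})) = card ({1..m+1} - {j0})"
    by (rule card_image) (use d_inj in \<open>auto intro: inj_on_subset\<close>)
  thus ?thesis using j0 by simp
qed

lemma poly_part:
  fixes c :: "nat \<Rightarrow> real"
  assumes c: "\<forall>i\<in>{1..m}. (\<Sum>j = 1..m+1. c j * a i ^ d j) = 0" and c1: "c 1 > 0"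
  shows "(\<forall>j\<in>{1..m+1}. (odd j \<longrightarrow> c j > 0) \<and> (even j \<longrightarrow> c j < 0))
    \<and> (\<forall>x. x > a m \<longrightarrow> poly (\<Sum>j = 1..m+1. monom (c j) (d j)) x > 0)"
proof -
  define H where "H = (\<Sum>j = 1..m+1. monom (c j) (d j))"
  define A where "A = a ` {1..m}"
  have finA: "finite A" unfolding A_def by simp
  have cA: "card A = m" unfolding A_def using cardA .
  have rootsA: "\<forall>x\<in>A. 0 < x \<and> poly H x = 0"
    unfolding A_def H_def poly_sum_monom using c a_pos by auto
  have cH: "\<forall>j\<in>{1..m+1}. coeff H (d j) = c j" unfolding H_def using coeffH_in by blast
  have cHo: "\<forall>n. n \<notin> d ` {1..m+1} \<longrightarrow> coeff H n = 0" unfolding H_def using coeffH_out by blast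
  have cH1: "coeff H (d 1) = c 1" using cH by simp
  have Hnz: "H \<noteq> 0"
  proof
    assume "H = 0"
    hence "coeff H (d 1) = 0" by simp
    thus False using cH1 c1 by simp
  qed
  have cnz: "\<forall>j\<in>{1..m+1}. c j \<noteq> 0"
  proof
    fix j0 assume j0: "j0 \<in> {1..m+1}"
    show "c j0 \<noteq> 0"
    proof
      assume c0: "c j0 = 0"
      have sub: "{n. coeff H n \<noteq> 0} \<subseteq> d ` ({1..m+1} - {j0})"
      proof
        fix n assume n: "n \<in> {n. coeff H n \<noteq> 0}"
        hence "n \<in> d ` {1..m+1}" using cHo by blast
        then obtain j where j: "j \<in> {1..m+1}" "n = d j" by auto
        have "j \<noteq> j0" using n j cH c0 by auto
        thus "n \<in> d ` ({1..m+1} - {j0})" using j by auto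
      qed
      have "card {n. coeff H n \<noteq> 0} \<le> m" using card_mono[OF _ sub] card_minus[OF j0] by simp
      moreover have "card A < card {n. coeff H n \<noteq> 0}" using roots_lower[OF Hnz finA rootsA] .
      ultimately show False using cA by simp
    qed
  qed
  define e where "e k = d (m + 1 - k)" for k
  define b where "b k = c (m + 1 - k)" for k
  have st: "strict e (m + 1)" unfolding strict_def e_def
  proof (intro allI impI)
    fix i j :: nat assume "i < j" "j < m + 1"
    thus "d (m + 1 - i) < d (m + 1 - j)" using dlt[of "m + 1 - j" "m + 1 - i"] by auto
  qed
  have bnz: "\<forall>k<m+1. b k \<noteq> 0" unfolding b_def using cnz by auto
  have polyeq: "poly (sp e b (m + 1)) x = poly H x" for x
  proof -
    have "poly (sp e b (m + 1)) x = (\<Sum>k<m+1. c (m + 1 - k) * x ^ d (m + 1 - k))"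
      unfolding sp_def poly_sum_monom e_def b_def ..
    also have "\<dots> = (\<Sum>j = 1..m+1. c j * x ^ d j)"
      by (rule sum.reindex_bij_witness[of _ "\<lambda>j. m + 1 - j" "\<lambda>k. m + 1 - k"]) auto
    finally show ?thesis unfolding H_def poly_sum_monom .
  qed
  define R where "R = {x. 0 < x \<and> poly H x = 0}"
  have D0: "finite {x::real. 0 < x \<and> poly (sp e b (m + 1)) x = 0} \<and> card {x::real. 0 < x \<and> poly (sp e b (m + 1)) x = 0} \<le> V b (m + 1)"
    by (rule descartes_sparse[rule_format]) (use st bnz in auto)
  have D: "finite R \<and> card R \<le> V b (m + 1)"
    using D0 unfolding R_def by (simp only: polyeq)
  have AR: "A \<subseteq> R" unfolding R_def using rootsA by auto
  have "m \<le> card R" using card_mono[OF _ AR] D cA by simp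
  hence mV: "m \<le> V b (m + 1)" using D by simp
  have alt: "\<forall>k<m. b k * b (Suc k) < 0"
    using count_all[of m "\<lambda>k. b k * b (Suc k) < 0"] mV unfolding V_def by simp
  have adj: "c j * c (Suc j) < 0" if "1 \<le> j" "j \<le> m" for j
    using alt[rule_format, of "m - j"] that unfolding b_def
    by (simp add: Suc_diff_Suc mult.commute)
  have sgn: "1 \<le> j \<longrightarrow> j \<le> m + 1 \<longrightarrow> (odd j \<longrightarrow> c j > 0) \<and> (even j \<longrightarrow> c j < 0)" for j
  proof (induction j)
    case 0 show ?case by simp
  next
    case (Suc j)
    show ?case
    proof (cases "j = 0")
      case True thus ?thesis using c1 by simp
    next
      case False
      show ?thesis
      proof (intro impI)
        assume "1 \<le> Suc j" "Suc j \<le> m + 1"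
        hence j: "1 \<le> j" "j \<le> m" using False by auto
        have a1: "c j * c (Suc j) < 0" using adj[OF j] .
        have IH: "(odd j \<longrightarrow> c j > 0) \<and> (even j \<longrightarrow> c j < 0)" using Suc.IH j by auto
        show "(odd (Suc j) \<longrightarrow> c (Suc j) > 0) \<and> (even (Suc j) \<longrightarrow> c (Suc j) < 0)"
        proof (cases "odd j")
          case True
          hence "c j > 0" using IH by auto
          hence "c (Suc j) < 0" using a1 by (simp add: mult_less_0_iff)
          thus ?thesis using True by simp
        next
          case False
          hence "c j < 0" using IH by auto
          hence "c (Suc j) > 0" using a1 by (simp add: mult_less_0_iff)
          thus ?thesis using False by simp
        qed
      qed
    qed
  qed
  have RA: "R = A"
  proof -
    have "card R \<le> m" using D V_le[of b "m + 1"] by simp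
    hence eq: "card A = card R" using cA \<open>m \<le> card R\<close> by simp
    have finR: "finite R" using D by blast
    have "A = R" by (rule card_subset_eq[OF finR AR eq])
    thus ?thesis by simp
  qed
  have degH: "degree H = d 1"
  proof (rule antisym)
    show "degree H \<le> d 1"
    proof (rule degree_le, intro allI impI)
      fix n assume "d 1 < n"
      have "n \<notin> d ` {1..m+1}"
      proof
        assume "n \<in> d ` {1..m+1}"
        then obtain j where "j \<in> {1..m+1}" "n = d j" by blast
        hence "n \<le> d 1" using d_le1 by simp
        thus False using \<open>d 1 < n\<close> by simp
      qed
      thus "coeff H n = 0" using cHo by blast
    qed
    show "d 1 \<le> degree H" using cH1 c1 by (auto intro: le_degree)
  qed
  have lc: "lead_coeff H = c 1" using degH cH1 by simp
  obtain N where N: "\<forall>x\<ge>N. poly H x \<ge> c 1" using poly_pinfty_gt_lc[of H] lc c1 by auto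
  have pos: "poly H x > 0" if x: "x > a m" for x
  proof (rule ccontr)
    assume "\<not> poly H x > 0"
    have am: "0 < a m" using a_pos hm by auto
    have "poly H x \<noteq> 0"
    proof
      assume "poly H x = 0"
      hence "x \<in> A" using RA x am unfolding R_def by auto
      then obtain i where "i \<in> {1..m}" "x = a i" unfolding A_def by blast
      hence "x \<le> a m" using a_le by simp
      thus False using x by simp
    qed
    hence neg: "poly H x < 0" using \<open>\<not> poly H x > 0\<close> by simp
    define y where "y = max N (x + 1)"
    have "poly H y > 0" using N c1 unfolding y_def by (meson max.cobounded1 order_less_le_trans)
    moreover have "x < y" unfolding y_def by simp
    ultimately obtain r where r: "x < r" "r < y" "poly H r = 0" using poly_IVT_pos[OF _ neg] by blast
    hence "r \<in> A" using RA x am unfolding R_def by auto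
    then obtain i where "i \<in> {1..m}" "r = a i" unfolding A_def by blast
    hence "r \<le> a m" using a_le by simp
    thus False using r x by simp
  qed
  have "\<forall>j\<in>{1..m+1}. (odd j \<longrightarrow> c j > 0) \<and> (even j \<longrightarrow> c j < 0)" using sgn by auto
  moreover have "\<forall>x. x > a m \<longrightarrow> poly H x > 0" using pos by blast
  ultimately show ?thesis unfolding H_def by blast
qed

lemma exist_part:
  "\<exists>c :: nat \<Rightarrow> real. (\<forall>i \<in> {1..m}. (\<Sum>j = 1..m+1. c j * a i ^ d j) = 0) \<and> c 1 > 0"
proof -
  define A where "A = a ` {1..m}"
  define S where "S = d ` {1..m+1}"
  have cS: "card S = Suc m" unfolding S_def using card_image[OF d_inj] by simp
  have cA: "card A = m" unfolding A_def using cardA .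
  have pre: "finite S \<and> card S = Suc m \<and> finite A \<and> card A = m \<and> (\<forall>x\<in>A. 0 < x)"
    using cS cA a_pos unfolding A_def S_def by auto
  obtain h where h: "h \<noteq> 0" "\<forall>n. coeff h n \<noteq> 0 \<longrightarrow> n \<in> S" "\<forall>x\<in>A. poly h x = 0"
    using exists_vanish[of m, rule_format, OF pre] by blast
  have h1: "coeff h (d 1) \<noteq> 0"
  proof
    assume c0: "coeff h (d 1) = 0"
    have one: "1 \<in> {1..m+1}" by simp
    have sub: "{n. coeff h n \<noteq> 0} \<subseteq> d ` ({1..m+1} - {1})"
    proof
      fix n assume n: "n \<in> {n. coeff h n \<noteq> 0}"
      then obtain j where j: "j \<in> {1..m+1}" "n = d j" using h(2) unfolding S_def by auto
      have "j \<noteq> 1" using n j c0 by auto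
      thus "n \<in> d ` ({1..m+1} - {1})" using j by auto
    qed
    have "card {n. coeff h n \<noteq> 0} \<le> m" using card_mono[OF _ sub] card_minus[OF one] by simp
    moreover have "card A < card {n. coeff h n \<noteq> 0}"
      using roots_lower[OF h(1)] h(3) a_pos unfolding A_def by auto
    ultimately show False using cA by simp
  qed
  define sg where "sg = (if coeff h (d 1) > 0 then 1 else -1 :: real)"
  define c where "c j = sg * coeff h (d j)" for j
  have hsupp: "\<forall>n. coeff h n \<noteq> 0 \<longrightarrow> n \<in> d ` {1..m+1}" using h(2) unfolding S_def .
  have hrep: "h = (\<Sum>j\<in>{1..m+1}. monom (coeff h (d j)) (d j))"
    by (rule supp_rep[OF _ d_inj hsupp]) simp
  have "(\<Sum>j = 1..m+1. c j * a i ^ d j) = 0" if i: "i \<in> {1..m}" for i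
  proof -
    have "poly h (a i) = 0" using h(3) i unfolding A_def by auto
    moreover have "poly (\<Sum>j\<in>{1..m+1}. monom (coeff h (d j)) (d j)) (a i) = (\<Sum>j = 1..m+1. coeff h (d j) * a i ^ d j)"
      by (rule poly_sum_monom)
    ultimately have "(\<Sum>j = 1..m+1. coeff h (d j) * a i ^ d j) = 0" by (simp only: hrep[symmetric])
    hence "sg * (\<Sum>j = 1..m+1. coeff h (d j) * a i ^ d j) = 0" by simp
    thus ?thesis unfolding c_def sum_distrib_left by (simp add: mult.assoc)
  qed
  moreover have "c 1 > 0" unfolding c_def sg_def using h1 by auto
  ultimately show ?thesis by blast
qed

end

theorem mainTheorem15:
  fixes m :: nat and a :: "nat \<Rightarrow> real" and f :: "real poly"
  assumes hm: "m \<ge> 1"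
    and ha0: "0 < a 1"
    and hamono: "\<And>i j. 1 \<le> i \<Longrightarrow> i < j \<Longrightarrow> j \<le> m \<Longrightarrow> a i < a j"
    and hf: "nonneg_poly f"
    and hd: "ddpoly f \<in> {m, m + 1}"
  defines "s \<equiv> (if ddpoly f = m then splus (sceil (Sign f)) else sceil (Sign f))"
  defines "d \<equiv> (\<lambda>j::nat. dec_supp s ! (j - 1))"
  shows "card (ssupp s) = m + 1
    \<and> ssupp s = d ` {1..m+1}
    \<and> (\<forall>j k. 1 \<le> j \<and> j < k \<and> k \<le> m + 1 \<longrightarrow> d j > d k)
    \<and> (\<exists>c :: nat \<Rightarrow> real. (\<forall>i \<in> {1..m}. (\<Sum>j = 1..m+1. c j * a i ^ d j) = 0) \<and> c 1 > 0)
    \<and> (\<forall>c :: nat \<Rightarrow> real. (\<forall>i \<in> {1..m}. (\<Sum>j = 1..m+1. c j * a i ^ d j) = 0) \<and> c 1 > 0 \<longrightarrow>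
        (let h = (\<Sum>j = 1..m+1. monom (c j) (d j));
             e = (\<lambda>j. coeff f (d j));
             t = Min ((\<lambda>i. \<bar>e (2 * i) / c (2 * i)\<bar>) ` {1..(m + 1) div 2});
             g = f + smult t h;
             s' = Sign g
         in f = (\<Sum>j = 1..m+1. monom (e j) (d j))
          \<and> nonneg_poly g \<and> (\<forall>i \<in> {1..(m + 1) div 2}. c (2 * i) \<noteq> 0)
          \<and> (\<forall>i \<in> {1..m}. poly g (a i) = poly f (a i))
          \<and> ssupp s' \<subset> ssupp s
          \<and> ssupp s - ssupp s' \<subseteq> {d (2 * i) | i. 1 \<le> 2 * i \<and> 2 * i \<le> m + 1}
          \<and> spreceq (Sign f) s \<and> sprec s s'
          \<and> dd s' = m + 1 \<and> dd s = m + 1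
          \<and> card (ssupp s') \<le> m
          \<and> (\<forall>x. x > a m \<longrightarrow> poly g x > poly f x)
          \<and> (\<forall>u::real. 0 < u \<and> u < 1 \<longrightarrow> Sign (smult (1 - u) f + smult u g) = s)))"
proof -
  obtain S where S: "s = of_supp S" "finite S" "card S = m + 1" "paired S" "ssupp (Sign f) \<subseteq> S"
      "\<forall>k\<in>S. even (cnt S k) \<longrightarrow> k \<in> ssupp (Sign f)" "spreceq (Sign f) s"
    using structure_s[OF hf hd, folded s_def] by blast
  have ssS: "ssupp s = S" using S(1) by simp
  have dd_eq: "d j = dec S ! (j - 1)" for j unfolding d_def dec_supp_eq ssS ..
  have dn: "d j \<in> S \<and> cnt S (d j) = j" if j: "j \<in> {1..m+1}" for j
  proof -
    have "j - 1 < card S" using j S(3) by auto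
    from dec_nth[OF S(2) this] show ?thesis unfolding dd_eq using j by simp
  qed
  have dstr: "\<forall>j k. 1 \<le> j \<and> j < k \<and> k \<le> m + 1 \<longrightarrow> d j > d k"
  proof (intro allI impI)
    fix j k :: nat assume jk: "1 \<le> j \<and> j < k \<and> k \<le> m + 1"
    hence "j - 1 < k - 1" "k - 1 < card S" using S(3) by auto
    thus "d j > d k" unfolding dd_eq using dec_strict[OF S(2)] by blast
  qed
  have dS: "S = d ` {1..m+1}"
  proof
    show "d ` {1..m+1} \<subseteq> S" using dn by auto
    show "S \<subseteq> d ` {1..m+1}"
    proof
      fix x assume "x \<in> S"
      hence "x \<in> set (dec S)" using dec_set[OF S(2)] by simp
      then obtain i where i: "i < length (dec S)" "x = dec S ! i" by (auto simp: in_set_conv_nth)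
      have "i < m + 1" using i dec_length[OF S(2)] S(3) by simp
      hence "Suc i \<in> {1..m+1}" "x = d (Suc i)" using i unfolding dd_eq by auto
      thus "x \<in> d ` {1..m+1}" by blast
    qed
  qed
  interpret setting m a d using hm ha0 hamono dstr by unfold_locales auto
  have SF: "Sign f = of_supp {n. coeff f n \<noteq> 0}" using Sign_nonneg_eq[OF hf] .
  have fnn: "\<forall>n. coeff f n \<ge> 0" using hf unfolding nonneg_poly_def by auto
  have cf: "\<forall>n. n \<notin> S \<longrightarrow> coeff f n = 0" using S(5) unfolding SF ssupp_of_supp by auto
  have evpos: "coeff f (d j) > 0" if j: "j \<in> {1..m+1}" "even j" for j
  proof -
    have "d j \<in> ssupp (Sign f)" using S(6) dn[OF j(1)] j(2) by auto
    hence "coeff f (d j) \<noteq> 0" unfolding SF ssupp_of_supp by simp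
    moreover have "coeff f (d j) \<ge> 0" using fnn by blast
    ultimately show ?thesis by linarith
  qed
  have part5: "(let h = (\<Sum>j = 1..m+1. monom (c j) (d j));
             e = (\<lambda>j. coeff f (d j));
             t = Min ((\<lambda>i. \<bar>e (2 * i) / c (2 * i)\<bar>) ` {1..(m + 1) div 2});
             g = f + smult t h;
             s' = Sign g
         in f = (\<Sum>j = 1..m+1. monom (e j) (d j))
          \<and> nonneg_poly g \<and> (\<forall>i \<in> {1..(m + 1) div 2}. c (2 * i) \<noteq> 0)
          \<and> (\<forall>i \<in> {1..m}. poly g (a i) = poly f (a i))
          \<and> ssupp s' \<subset> ssupp s
          \<and> ssupp s - ssupp s' \<subseteq> {d (2 * i) | i. 1 \<le> 2 * i \<and> 2 * i \<le> m + 1}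
          \<and> spreceq (Sign f) s \<and> sprec s s'
          \<and> dd s' = m + 1 \<and> dd s = m + 1
          \<and> card (ssupp s') \<le> m
          \<and> (\<forall>x. x > a m \<longrightarrow> poly g x > poly f x)
          \<and> (\<forall>u::real. 0 < u \<and> u < 1 \<longrightarrow> Sign (smult (1 - u) f + smult u g) = s))"
    if hc: "(\<forall>i \<in> {1..m}. (\<Sum>j = 1..m+1. c j * a i ^ d j) = 0) \<and> c 1 > 0" for c :: "nat \<Rightarrow> real"
  proof -
    have pp: "\<forall>j\<in>{1..m+1}. (odd j \<longrightarrow> c j > 0) \<and> (even j \<longrightarrow> c j < 0)"
      "\<forall>x. x > a m \<longrightarrow> poly (\<Sum>j = 1..m+1. monom (c j) (d j)) x > 0"
      using poly_part[of c] hc by auto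
    define h where "h = (\<Sum>j = 1..m+1. monom (c j) (d j))"
    define e where "e = (\<lambda>j. coeff f (d j))"
    define I where "I = {1..(m + 1) div 2}"
    define t where "t = Min ((\<lambda>i. \<bar>e (2 * i) / c (2 * i)\<bar>) ` I)"
    define g where "g = f + smult t h"
    define s' where "s' = Sign g"
    have cH: "\<forall>j\<in>{1..m+1}. coeff h (d j) = c j" unfolding h_def using coeffH_in by blast
    have cHo: "\<forall>n. n \<notin> S \<longrightarrow> coeff h n = 0" unfolding h_def dS using coeffH_out by blast
    have frep: "f = (\<Sum>j = 1..m+1. monom (e j) (d j))"
      unfolding e_def by (rule supp_rep[OF _ d_inj]) (use cf dS in auto)
    have Ifacts: "2 * i \<in> {1..m+1} \<and> e (2 * i) > 0 \<and> c (2 * i) < 0" if i: "i \<in> I" for i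
    proof -
      have "2 * i \<in> {1..m+1}" using i unfolding I_def by auto
      thus ?thesis using evpos pp(1) unfolding e_def by auto
    qed
    have Ine: "I \<noteq> {}" unfolding I_def using hm by auto
    have finI: "finite I" unfolding I_def by simp
    have tle: "t \<le> \<bar>e (2 * i) / c (2 * i)\<bar>" if "i \<in> I" for i
      unfolding t_def using that finI by (intro Min_le) auto
    have "t \<in> (\<lambda>i. \<bar>e (2 * i) / c (2 * i)\<bar>) ` I" unfolding t_def
      by (rule Min_in) (use finI Ine in auto)
    then obtain i0 where i0: "i0 \<in> I" "t = \<bar>e (2 * i0) / c (2 * i0)\<bar>" by blast
    have tpos: "t > 0"
    proof -
      have "e (2 * i0) > 0" "c (2 * i0) < 0" using Ifacts[OF i0(1)] by auto
      hence "e (2 * i0) / c (2 * i0) \<noteq> 0" by simp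
      hence "0 < \<bar>e (2 * i0) / c (2 * i0)\<bar>" by (rule zero_less_abs_iff[THEN iffD2])
      thus ?thesis unfolding i0(2) .
    qed
    have key: "e (2 * i) + t * c (2 * i) \<ge> 0" if i: "i \<in> I" for i
    proof -
      have ec: "e (2 * i) > 0" "c (2 * i) < 0" using Ifacts[OF i] by auto
      have "t \<le> e (2 * i) / (- c (2 * i))" using tle[OF i] ec by (simp add: abs_div_pos abs_of_pos abs_of_neg)
      moreover have nc: "- c (2 * i) > 0" using ec by simp
      ultimately have "t * (- c (2 * i)) \<le> e (2 * i)" by (simp only: pos_le_divide_eq[OF nc])
      thus ?thesis by simp
    qed
    have key0: "e (2 * i0) + t * c (2 * i0) = 0"
    proof -
      have ec: "e (2 * i0) > 0" "c (2 * i0) < 0" using Ifacts[OF i0(1)] by auto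
      have "t = e (2 * i0) / (- c (2 * i0))" using i0(2) ec by (simp add: abs_of_pos abs_of_neg)
      thus ?thesis using ec by (simp add: field_simps)
    qed
    have cg: "coeff g n = coeff f n + t * coeff h n" for n unfolding g_def by simp
    have cgd: "coeff g (d j) = e j + t * c j" if "j \<in> {1..m+1}" for j
      using cg cH that unfolding e_def by simp
    have cgo: "coeff g n = 0" if "n \<notin> S" for n using cg cHo cf that by simp
    have oddpos: "e j + t * c j > 0" if j: "j \<in> {1..m+1}" "odd j" for j
    proof -
      have "c j > 0" using pp(1) j by auto
      hence "t * c j > 0" using tpos by simp
      moreover have "e j \<ge> 0" unfolding e_def using fnn by simp
      ultimately show ?thesis by simp
    qed
    have evnn: "e j + t * c j \<ge> 0" if j: "j \<in> {1..m+1}" "even j" for j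
    proof -
      obtain i where i: "j = 2 * i" using j(2) by blast
      have "i \<in> I" using j i unfolding I_def by auto
      thus ?thesis using key i by simp
    qed
    have gnn: "nonneg_poly g" unfolding nonneg_poly_def
    proof
      fix n show "coeff g n \<ge> 0"
      proof (cases "n \<in> S")
        case True
        then obtain j where j: "j \<in> {1..m+1}" "n = d j" using dS by auto
        thus ?thesis using cgd[OF j(1)] oddpos[OF j(1)] evnn[OF j(1)] by (cases "odd j") auto
      next
        case False thus ?thesis using cgo by simp
      qed
    qed
    have c2: "\<forall>i\<in>I. c (2 * i) \<noteq> 0" using Ifacts by force
    have pg: "\<forall>i\<in>{1..m}. poly g (a i) = poly f (a i)"
    proof
      fix i assume i: "i \<in> {1..m}"
      have "poly h (a i) = 0" unfolding h_def poly_sum_monom using hc i by auto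
      thus "poly g (a i) = poly f (a i)" unfolding g_def by simp
    qed
    have Sg: "s' = of_supp {n. coeff g n \<noteq> 0}" unfolding s'_def using Sign_nonneg_eq[OF gnn] .
    define S' where "S' = {n. coeff g n \<noteq> 0}"
    have ss': "ssupp s' = S'" unfolding Sg S'_def by simp
    have S'S: "S' \<subseteq> S" unfolding S'_def using cgo by auto
    have i0S: "d (2 * i0) \<in> S" "d (2 * i0) \<notin> S'"
      using dn Ifacts[OF i0(1)] cgd[of "2 * i0"] key0 unfolding S'_def by auto
    have psub: "S' \<subset> S" using S'S i0S by auto
    have diff: "S - S' \<subseteq> {d (2 * i) | i. 1 \<le> 2 * i \<and> 2 * i \<le> m + 1}"
    proof
      fix n assume n: "n \<in> S - S'"
      then obtain j where j: "j \<in> {1..m+1}" "n = d j" using dS by auto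
      have "coeff g n = 0" using n unfolding S'_def by auto
      hence "\<not> odd j" using oddpos[OF j(1)] cgd[OF j(1)] j(2) by auto
      then obtain i where "j = 2 * i" by blast
      thus "n \<in> {d (2 * i) | i. 1 \<le> 2 * i \<and> 2 * i \<le> m + 1}" using j by auto
    qed
    have finS': "finite S'" using S'S S(2) finite_subset by auto
    have sSS: "s \<in> SSplus" using S(1) of_supp_SSplus[OF S(2)] by simp
    have s'SS: "s' \<in> SSplus" using Sg of_supp_SSplus[OF finS'] unfolding S'_def by simp
    have R: "\<forall>k\<in>S - S'. even (cnt S k)"
    proof
      fix k assume "k \<in> S - S'"
      then obtain i where i: "k = d (2 * i)" "1 \<le> 2 * i" "2 * i \<le> m + 1" using diff by blast
      hence "cnt S k = 2 * i" using dn[of "2 * i"] by auto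
      thus "even (cnt S k)" by simp
    qed
    have S'eq: "S - (S - S') = S'" using S'S by auto
    have fl: "Fset S' = S" using removal_floor[OF S(2) S(4) _ R] S'eq by auto
    have ceilS: "sceil s = s" unfolding sceil_eq ssS using paired_Cset[OF S(2,4)] S(1) by simp
    have floorS': "sfloor s' = s" unfolding sfloor_eq ss' fl using S(1) by simp
    have pre: "preceq0 s s" unfolding S(1) by (rule preceq0_sub[OF S(2) subset_refl S(4) S(4)])
    have sne: "s \<noteq> s'" using psub ss' ssS by auto
    have sprec: "sprec s s'" unfolding sprec_def spreceq_def using sSS s'SS pre ceilS floorS' sne by auto
    have dds': "dd s' = m + 1" using dd_formula[OF s'SS] card_Fset[OF finS'] fl ss' S(3) by simp
    have dds: "dd s = m + 1" using dd_paired[OF S(2,4)] S(1,3) by simp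
    have cards': "card (ssupp s') \<le> m" using psubset_card_mono[OF S(2) psub] ss' S(3) by simp
    have grow: "\<forall>x. x > a m \<longrightarrow> poly g x > poly f x"
    proof (intro allI impI)
      fix x assume "x > a m"
      hence "poly h x > 0" using pp(2) unfolding h_def by auto
      hence "t * poly h x > 0" using tpos by simp
      thus "poly g x > poly f x" unfolding g_def by simp
    qed
    have conv: "\<forall>u::real. 0 < u \<and> u < 1 \<longrightarrow> Sign (smult (1 - u) f + smult u g) = s"
    proof (intro allI impI)
      fix u :: real assume u: "0 < u \<and> u < 1"
      have cq: "coeff (smult (1 - u) f + smult u g) n = coeff f n + (u * t) * coeff h n" for n
        by (simp add: cg algebra_simps)
      have "Sign (smult (1 - u) f + smult u g) = of_supp S"
      proof (rule Sign_eq_of_supp)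
        show "\<forall>n\<in>S. 0 < coeff (smult (1 - u) f + smult u g) n"
        proof
          fix n assume "n \<in> S"
          then obtain j where j: "j \<in> {1..m+1}" "n = d j" using dS by auto
          have q: "coeff (smult (1 - u) f + smult u g) n = e j + (u * t) * c j"
            using cq cH j unfolding e_def by simp
          show "0 < coeff (smult (1 - u) f + smult u g) n"
          proof (cases "odd j")
            case True
            have "c j > 0" using pp(1) j True by auto
            hence "(u * t) * c j > 0" using tpos u by simp
            moreover have "e j \<ge> 0" unfolding e_def using fnn by simp
            ultimately show ?thesis using q by simp
          next
            case False
            have cj: "c j < 0" using pp(1) j False by auto
            have "e j + t * c j \<ge> 0" using evnn[OF j(1)] False by simp
            moreover have "(u * t) * c j > t * c j"
            proof -
              have "(1 - u) * t > 0" using u tpos by simp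
              hence "((1 - u) * t) * c j < 0" using cj by (simp add: mult_pos_neg)
              thus ?thesis by (simp add: algebra_simps)
            qed
            ultimately show ?thesis using q by simp
          qed
        qed
        show "\<forall>n. n \<notin> S \<longrightarrow> coeff (smult (1 - u) f + smult u g) n = 0"
        proof (intro allI impI)
          fix n assume "n \<notin> S"
          thus "coeff (smult (1 - u) f + smult u g) n = 0" using cq[of n] cf cHo by simp
        qed
      qed
      thus "Sign (smult (1 - u) f + smult u g) = s" using S(1) by simp
    qed
    have all: "f = (\<Sum>j = 1..m+1. monom (e j) (d j))
          \<and> nonneg_poly g \<and> (\<forall>i \<in> {1..(m + 1) div 2}. c (2 * i) \<noteq> 0)
          \<and> (\<forall>i \<in> {1..m}. poly g (a i) = poly f (a i))
          \<and> ssupp s' \<subset> ssupp s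
          \<and> ssupp s - ssupp s' \<subseteq> {d (2 * i) | i. 1 \<le> 2 * i \<and> 2 * i \<le> m + 1}
          \<and> spreceq (Sign f) s \<and> sprec s s'
          \<and> dd s' = m + 1 \<and> dd s = m + 1
          \<and> card (ssupp s') \<le> m
          \<and> (\<forall>x. x > a m \<longrightarrow> poly g x > poly f x)
          \<and> (\<forall>u::real. 0 < u \<and> u < 1 \<longrightarrow> Sign (smult (1 - u) f + smult u g) = s)"
      using frep gnn c2 pg psub diff S(7) sprec dds' dds cards' grow conv ss' ssS unfolding I_def by auto
    show ?thesis unfolding Let_def using all[unfolded s'_def g_def t_def I_def e_def h_def] .
  qed
  have c1: "card (ssupp s) = m + 1" using ssS S(3) by simp
  show ?thesis using c1 dS ssS dstr exist_part part5 by auto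
qed


end
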